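(* Let $g:\mathbb{R}^m\to\overline{\mathbb{R}}$ be a polyhedral function and $(\bar z,\bar\lambda)\in\mathrm{gph}\,\partial g$, and let $g^*$ be its Fenchel conjugate. The following are equivalent: (a) there is a neighborhood $O$ of $(\bar z,\bar\lambda)$ such that for every $(z,\lambda)\in O\cap\mathrm{gph}\,\partial g$, $g$ is strictly twice epi-differentiable at $z$ for $\lambda$; (b) there is a neighborhood $U$ of $(\bar\lambda,\bar z)$ such that for every $(\lambda,z)\in U\cap\mathrm{gph}\,\partial g^*$, $g^*$ is strictly twice epi-differentiable at $\lambda$ for $z$; (c) $\bar\lambda\in\mathrm{ri}\,\partial g(\bar z)$; (d) $\bar z\in\mathrm{ri}\,\partial g^*(\bar\lambda)$.
   Context: A proper function $g:\mathbb{R}^m\to\overline{\mathbb{R}}$ is polyhedral if its epigraph is a polyhedral convex set; $\partial$ is the convex-analysis subdifferential; $\mathrm{ri}$ is relative interior; $g^*(\lambda)=\sup_z\{\langle\lambda,z\rangle-g(z)\}$. For $f:\mathbb{R}^n\to\overline{\mathbb{R}}$, $f(x)$ finite, $v\in\partial f(x)$, $t>0$, set $\Delta_t^2 f(x,v)(w)=\frac{f(x+tw)-f(x)-t\langle v,w\rangle}{\frac12 t^2}$. Epi-convergence means Painlevé–Kuratowski convergence of epigraphs. $f$ is strictly twice epi-differentiable at $\bar x$ for $\bar v\in\partial f(\bar x)$ if the functions $\Delta_t^2 f(x,v)$ epi-converge to some function as $t\searrow 0$ and $(x,v)\to(\bar x,\bar v)$ with $(x,v)\in\mathrm{gph}\,\partial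 f$ and $f(x)\to f(\bar x)$. *)

theory Defs
  imports "HOL-Analysis.Analysis" "HOL-Library.Extended_Real"
begin

definition epi :: "('a \<Rightarrow> ereal) \<Rightarrow> ('a \<times> real) set" where
  "epi f = {(x, r). f x \<le> ereal r}"

definition proper_fun :: "('a \<Rightarrow> ereal) \<Rightarrow> bool" where
  "proper_fun f \<longleftrightarrow> (\<forall>x. f x \<noteq> -\<infinity>) \<and> (\<exists>x. f x \<noteq> \<infinity>)"

definition polyhedral_fun :: "('a::euclidean_space \<Rightarrow> ereal) \<Rightarrow> bool" where
  "polyhedral_fun f \<longleftrightarrow> proper_fun f \<and> polyhedron (epi f)"

definition subdiff :: "('a::real_inner \<Rightarrow> ereal) \<Rightarrow> 'a \<Rightarrow> 'a set" where
  "subdiff f x = {v. \<bar>f x\<bar> \<noteq> \<infinity> \<and> (\<forall>y. f x + ereal (inner v (y - x)) \<le> f y)}"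

definition gph_subdiff :: "('a::real_inner \<Rightarrow> ereal) \<Rightarrow> ('a \<times> 'a) set" where
  "gph_subdiff f = {(x, v). v \<in> subdiff f x}"

definition fconj :: "('a::real_inner \<Rightarrow> ereal) \<Rightarrow> 'a \<Rightarrow> ereal" where
  "fconj g y = (SUP z. ereal (inner y z) - g z)"

definition diffq2 :: "('a::real_inner \<Rightarrow> ereal) \<Rightarrow> 'a \<Rightarrow> 'a \<Rightarrow> real \<Rightarrow> 'a \<Rightarrow> ereal" where
  "diffq2 f x v t w = (f (x + t *\<^sub>R w) - f x - ereal (t * inner v w)) * ereal (2 / t\<^sup>2)"

definition PK_liminf :: "('p \<Rightarrow> 'b::topological_space set) \<Rightarrow> 'p filter \<Rightarrow> 'b set" where
  "PK_liminf C F = {y. \<forall>U. open U \<and> y \<in> U \<longrightarrow> (\<forall>\<^sub>F p in F. C p \<inter> U \<noteq> {})}"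

definition PK_limsup :: "('p \<Rightarrow> 'b::topological_space set) \<Rightarrow> 'p filter \<Rightarrow> 'b set" where
  "PK_limsup C F = {y. \<forall>U. open U \<and> y \<in> U \<longrightarrow> (\<exists>\<^sub>F p in F. C p \<inter> U \<noteq> {})}"

definition PK_converges :: "('p \<Rightarrow> 'b::topological_space set) \<Rightarrow> 'p filter \<Rightarrow> 'b set \<Rightarrow> bool" where
  "PK_converges C F S \<longleftrightarrow> PK_liminf C F = S \<and> PK_limsup C F = S"

text \<open>The parameter filter for strict twice epi-differentiability at xb for vb:
  t tends to 0 from above, (x,v) tends to (xb,vb) within gph of the subdifferential,
  and f x tends to f xb.\<close>
definition strict_epi_filter :: "('a::real_inner \<Rightarrow> ereal) \<Rightarrow> 'a \<Rightarrow> 'a \<Rightarrow> (real \<times> 'a \<times> 'a) filter" where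
  "strict_epi_filter f xb vb =
     inf (at (0, xb, vb) within {(t, x, v). 0 < t \<and> v \<in> subdiff f x})
         (filtercomap (\<lambda>(t, x, v). f x) (nhds (f xb)))"

definition strictly_twice_epi_diff :: "('a::real_inner \<Rightarrow> ereal) \<Rightarrow> 'a \<Rightarrow> 'a \<Rightarrow> bool" where
  "strictly_twice_epi_diff f xb vb \<longleftrightarrow>
     vb \<in> subdiff f xb \<and>
     (\<exists>h. PK_converges (\<lambda>(t, x, v). epi (diffq2 f x v t)) (strict_epi_filter f xb vb) (epi h))"

end

theory Submission
  imports Defs
begin


definition pmax :: "('a::real_inner \<times> real) set \<Rightarrow> 'a \<Rightarrow> real" where
  "pmax A x = Max ((\<lambda>(a,b). inner a x + b) ` A)"

definition pdom :: "('a::real_inner \<times> real) set \<Rightarrow> 'a set" where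
  "pdom B = {x. \<forall>(c,d)\<in>B. inner c x \<le> d}"

definition pform :: "('a::real_inner \<times> real) set \<Rightarrow> ('a \<times> real) set \<Rightarrow> 'a \<Rightarrow> ereal" where
  "pform A B x = (if x \<in> pdom B then ereal (pmax A x) else \<infinity>)"

lemma pmax_ge: "finite A \<Longrightarrow> (a,b) \<in> A \<Longrightarrow> inner a x + b \<le> pmax A x"
  unfolding pmax_def by (rule Max_ge) force+

lemma pmax_le_iff: "finite A \<Longrightarrow> A \<noteq> {} \<Longrightarrow> pmax A x \<le> r \<longleftrightarrow> (\<forall>(a,b)\<in>A. inner a x + b \<le> r)"
  unfolding pmax_def by (subst Max_le_iff) auto

lemma pmax_in: "finite A \<Longrightarrow> A \<noteq> {} \<Longrightarrow> \<exists>(a,b)\<in>A. pmax A x = inner a x + b"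
proof -
  assume "finite A" "A \<noteq> {}"
  then have "Max ((\<lambda>(a,b). inner a x + b) ` A) \<in> (\<lambda>(a,b). inner a x + b) ` A"
    by (intro Max_in) auto
  then show ?thesis unfolding pmax_def by auto
qed

lemma ereal_all_le_neq: 
  fixes y :: ereal
  assumes "\<forall>r. \<not> y \<le> ereal r" shows "y = \<infinity>"
  using assms by (cases y) auto

lemma rep_polyhedral:
  fixes g :: "'a::euclidean_space \<Rightarrow> ereal"
  assumes "polyhedral_fun g"
  shows "\<exists>A B. finite A \<and> A \<noteq> {} \<and> finite B \<and> pdom B \<noteq> {} \<and> g = pform A B"
proof -
  from assms obtain F where F: "finite F" "epi g = \<Inter>F"
      "\<forall>h\<in>F. \<exists>a b. a \<noteq> 0 \<and> h = {x. inner a x \<le> b}"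
    unfolding polyhedral_fun_def polyhedron_def by blast
  then have "\<forall>h\<in>F. \<exists>ab. h = {x. inner (fst ab) x \<le> snd ab}" by force
  then obtain nb where nb: "\<forall>h\<in>F. h = {x. inner (fst (nb h)) x \<le> snd (nb h)}"
    by metis
  define p where "p h = fst (fst (nb h))" for h
  define al where "al h = snd (fst (nb h))" for h
  define bb where "bb h = snd (nb h)" for h
  have hmem: "(x, r) \<in> h \<longleftrightarrow> inner (p h) x + al h * r \<le> bb h" if "h \<in> F" for h x r
  proof -
    have "(x,r) \<in> h \<longleftrightarrow> inner (fst (nb h)) (x,r) \<le> snd (nb h)"
      using nb that by blast
    also have "\<dots> \<longleftrightarrow> inner (p h) x + al h * r \<le> bb h"
      unfolding p_def al_def bb_def by (cases "fst (nb h)") (simp add: inner_Pair)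
    finally show ?thesis .
  qed
  have epi_iff: "g x \<le> ereal r \<longleftrightarrow> (\<forall>h\<in>F. inner (p h) x + al h * r \<le> bb h)" for x r
  proof -
    have "g x \<le> ereal r \<longleftrightarrow> (x, r) \<in> epi g" unfolding epi_def by simp
    also have "\<dots> \<longleftrightarrow> (\<forall>h\<in>F. (x,r) \<in> h)" using F(2) by auto
    finally show ?thesis using hmem by auto
  qed
  from assms obtain x0 where "g x0 \<noteq> \<infinity>" "g x0 \<noteq> -\<infinity>"
    unfolding polyhedral_fun_def proper_fun_def by blast
  then obtain r0 where r0: "g x0 = ereal r0" by (cases "g x0") auto
  have al_le: "al h \<le> 0" if "h \<in> F" for h
  proof (rule ccontr)
    assume "\<not> al h \<le> 0"
    then have pos: "al h > 0" by simp
    define s where "s = (\<bar>bb h - inner (p h) x0 - al h * r0\<bar> + 1) / al h"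
    have "g x0 \<le> ereal (r0 + s)" using r0 pos unfolding s_def
      by (simp add: divide_nonneg_pos)
    then have "inner (p h) x0 + al h * (r0 + s) \<le> bb h" using epi_iff that by blast
    moreover have "al h * s = \<bar>bb h - inner (p h) x0 - al h * r0\<bar> + 1"
      unfolding s_def using pos by simp
    ultimately show False by (simp add: algebra_simps)
  qed
  define Fn where "Fn = {h\<in>F. al h < 0}"
  define F0 where "F0 = {h\<in>F. al h = 0}"
  define A where "A = (\<lambda>h. ((- (1 / al h)) *\<^sub>R p h, bb h / al h)) ` Fn"
  define B where "B = (\<lambda>h. (p h, bb h)) ` F0"
  have fin: "finite A" "finite B" unfolding A_def B_def Fn_def F0_def using F(1) by auto
  have key: "g x \<le> ereal r \<longleftrightarrow> x \<in> pdom B \<and> (\<forall>(a,b)\<in>A. inner a x + b \<le> r)" for x r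
  proof -
    have e1: "inner (p h) x + al h * r \<le> bb h \<longleftrightarrow> inner ((- (1 / al h)) *\<^sub>R p h) x + bb h / al h \<le> r"
      if "h \<in> Fn" for h
    proof -
      have n: "al h < 0" using that Fn_def by auto
      have "inner ((- (1 / al h)) *\<^sub>R p h) x + bb h / al h = (bb h - inner (p h) x) / al h"
        using n by (simp add: field_simps)
      then show ?thesis using n by (simp add: pos_le_divide_eq neg_divide_le_eq algebra_simps)
    qed
    have "F = Fn \<union> F0" using al_le Fn_def F0_def by force
    then have "g x \<le> ereal r \<longleftrightarrow> (\<forall>h\<in>Fn. inner (p h) x + al h * r \<le> bb h) \<and> (\<forall>h\<in>F0. inner (p h) x \<le> bb h)"
      using epi_iff F0_def by auto
    also have "\<dots> \<longleftrightarrow> (\<forall>(a,b)\<in>A. inner a x + b \<le> r) \<and> x \<in> pdom B"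
      using e1 unfolding A_def B_def pdom_def by auto
    finally show ?thesis by blast
  qed
  have Ane: "A \<noteq> {}"
  proof
    assume "A = {}"
    then have "g x0 \<le> ereal (r0 - 1)" using key[of x0 "r0 - 1"] key[of x0 r0] r0 by simp
    then show False using r0 by simp
  qed
  have "g = pform A B"
  proof
    fix x
    show "g x = pform A B x"
    proof (cases "x \<in> pdom B")
      case True
      have "g x \<le> ereal (pmax A x)" using key True pmax_ge[OF fin(1)] by auto
      moreover have "ereal (pmax A x) \<le> g x"
        by (rule ereal_le_real) (use key True pmax_le_iff[OF fin(1) Ane] in auto)
      ultimately show ?thesis using True unfolding pform_def by simp
    next
      case False
      then have "g x = \<infinity>" using key by (intro ereal_all_le_neq) auto
      then show ?thesis using False unfolding pform_def by simp
    qed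
  qed
  moreover have "x0 \<in> pdom B" using key[of x0 r0] r0 by simp
  ultimately show ?thesis using fin Ane by blast
qed



definition Kc :: "'a::real_inner set \<Rightarrow> 'a set" where
  "Kc C0 = {u. \<forall>c\<in>C0. inner c u \<le> 0}"

definition phr :: "'a::real_inner set \<Rightarrow> 'a \<Rightarrow> real" where
  "phr A0 u = Max ((\<lambda>a. inner a u) ` A0)"

definition Fs :: "'a::real_inner set \<Rightarrow> 'a set \<Rightarrow> 'a set" where
  "Fs A0 C0 = {v. \<forall>u\<in>Kc C0. inner v u \<le> phr A0 u}"

definition LD :: "('a::real_inner \<Rightarrow> ereal) \<Rightarrow> 'a \<Rightarrow> 'a set \<Rightarrow> 'a set \<Rightarrow> real \<Rightarrow> real \<Rightarrow> bool" where
  "LD f xb A0 C0 r m \<longleftrightarrow> finite A0 \<and> A0 \<noteq> {} \<and> finite C0 \<and> 0 < r \<and> f xb = ereal m \<and>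
     (\<forall>u. norm u < r \<longrightarrow> f (xb + u) = (if u \<in> Kc C0 then ereal (m + phr A0 u) else \<infinity>)) \<and>
     (\<forall>u. u \<in> Kc C0 \<longrightarrow> ereal (m + phr A0 u) \<le> f (xb + u)) \<and>
     (\<forall>u. u \<notin> Kc C0 \<longrightarrow> f (xb + u) = \<infinity>)"

lemma phr_ge: "finite A0 \<Longrightarrow> a \<in> A0 \<Longrightarrow> inner a u \<le> phr A0 u"
  unfolding phr_def by (rule Max_ge) auto

lemma phr_in: "finite A0 \<Longrightarrow> A0 \<noteq> {} \<Longrightarrow> \<exists>a\<in>A0. phr A0 u = inner a u"
proof -
  assume "finite A0" "A0 \<noteq> {}"
  then have "Max ((\<lambda>a. inner a u) ` A0) \<in> (\<lambda>a. inner a u) ` A0" by (intro Max_in) auto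
  then show ?thesis unfolding phr_def by auto
qed

lemma phr_le_iff: "finite A0 \<Longrightarrow> A0 \<noteq> {} \<Longrightarrow> phr A0 u \<le> r \<longleftrightarrow> (\<forall>a\<in>A0. inner a u \<le> r)"
  unfolding phr_def by (subst Max_le_iff) auto

lemma phr_scale: assumes "finite A0" "A0 \<noteq> {}" "0 \<le> s" shows "phr A0 (s *\<^sub>R u) = s * phr A0 u"
proof -
  obtain a where a: "a \<in> A0" "phr A0 u = inner a u" using phr_in assms by blast
  have "phr A0 (s *\<^sub>R u) \<le> s * phr A0 u"
    using assms phr_ge[OF assms(1)] by (subst phr_le_iff) (auto intro: mult_left_mono)
  moreover have "s * phr A0 u \<le> phr A0 (s *\<^sub>R u)" using phr_ge[OF assms(1) a(1), of "s *\<^sub>R u"] a by simp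
  ultimately show ?thesis by simp
qed

lemma phr_zero: "finite A0 \<Longrightarrow> A0 \<noteq> {} \<Longrightarrow> phr A0 0 = 0"
  using phr_scale[of A0 0 0] by simp

lemma phr_add: assumes "finite A0" "A0 \<noteq> {}" shows "phr A0 (u + y) \<le> phr A0 u + phr A0 y"
proof -
  obtain a where a: "a \<in> A0" "phr A0 (u+y) = inner a (u+y)" using phr_in assms by blast
  then show ?thesis using phr_ge[OF assms(1) a(1), of u] phr_ge[OF assms(1) a(1), of y]
    by (simp add: inner_add_right)
qed

lemma Kc_scale: "u \<in> Kc C0 \<Longrightarrow> 0 \<le> s \<Longrightarrow> s *\<^sub>R u \<in> Kc C0"
  unfolding Kc_def by (auto simp: mult_nonneg_nonpos)

lemma Kc_add: "u \<in> Kc C0 \<Longrightarrow> y \<in> Kc C0 \<Longrightarrow> u + y \<in> Kc C0"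
  unfolding Kc_def by (auto simp: inner_add_right add_nonpos_nonpos)

lemma Kc_zero: "0 \<in> Kc C0" unfolding Kc_def by auto

lemma A0_Fs: "finite A0 \<Longrightarrow> a \<in> A0 \<Longrightarrow> a \<in> Fs A0 C0"
  unfolding Fs_def using phr_ge by auto

lemma Fs_shift: "v \<in> Fs A0 C0 \<Longrightarrow> c \<in> C0 \<Longrightarrow> 0 \<le> s \<Longrightarrow> v + s *\<^sub>R c \<in> Fs A0 C0"
  unfolding Fs_def Kc_def
  by (auto simp: inner_add_left) (smt (verit, ccfv_threshold) mult_nonneg_nonpos)

lemma convex_Fs: "convex (Fs A0 C0)"
  unfolding Fs_def convex_def
proof (safe)
  fix x y u v :: real and a b
  assume *: "\<forall>w\<in>Kc C0. a \<bullet> w \<le> phr A0 w" "\<forall>w\<in>Kc C0. b \<bullet> w \<le> phr A0 w" "0 \<le> u" "0 \<le> v" "u + v = 1"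
  fix w assume w: "w \<in> Kc C0"
  have "(u *\<^sub>R a + v *\<^sub>R b) \<bullet> w = u * (a \<bullet> w) + v * (b \<bullet> w)" by (simp add: inner_add_left)
  also have "\<dots> \<le> u * phr A0 w + v * phr A0 w"
    using * w by (intro add_mono mult_left_mono) auto
  also have "\<dots> = (u + v) * phr A0 w" by (simp add: distrib_right)
  also have "\<dots> = phr A0 w" using *(5) by simp
  finally show "(u *\<^sub>R a + v *\<^sub>R b) \<bullet> w \<le> phr A0 w" .
qed

lemma nchar:
  assumes "finite A0" "A0 \<noteq> {}" "v \<in> Fs A0 C0"
  shows "(u \<in> Kc C0 \<and> inner v u = phr A0 u) \<longleftrightarrow> (\<forall>f\<in>Fs A0 C0. inner f u \<le> inner v u)"
proof
  assume "u \<in> Kc C0 \<and> inner v u = phr A0 u"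
  then show "\<forall>f\<in>Fs A0 C0. inner f u \<le> inner v u" unfolding Fs_def by auto
next
  assume H: "\<forall>f\<in>Fs A0 C0. inner f u \<le> inner v u"
  have uK: "u \<in> Kc C0"
  proof (rule ccontr)
    assume "u \<notin> Kc C0"
    then obtain c where c: "c \<in> C0" "inner c u > 0" unfolding Kc_def by auto
    have "v + 1 *\<^sub>R c \<in> Fs A0 C0" by (rule Fs_shift[OF assms(3) c(1)]) simp
    then have "inner (v + 1 *\<^sub>R c) u \<le> inner v u" using H by blast
    then show False using c by (simp add: inner_add_left)
  qed
  obtain a where "a \<in> A0" "phr A0 u = inner a u" using phr_in assms by blast
  then have "phr A0 u \<le> inner v u" using H A0_Fs[OF assms(1)] by auto
  moreover have "inner v u \<le> phr A0 u" using assms(3) uK unfolding Fs_def by auto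
  ultimately show "u \<in> Kc C0 \<and> inner v u = phr A0 u" using uK by simp
qed

lemma subdiff_finite: "v \<in> subdiff f x \<Longrightarrow> \<exists>m. f x = ereal m"
  unfolding subdiff_def by (cases "f x") auto

lemma subdiff_ineq: "v \<in> subdiff f x \<Longrightarrow> f x + ereal (inner v (y - x)) \<le> f y"
  unfolding subdiff_def by auto

lemma subd:
  fixes f :: "'a::real_inner \<Rightarrow> ereal"
  assumes LD: "LD f xb A0 C0 r m" and u: "norm u < r"
  shows "v \<in> subdiff f (xb + u) \<longleftrightarrow> u \<in> Kc C0 \<and> v \<in> Fs A0 C0 \<and> inner v u = phr A0 u"
proof
  have fin: "finite A0" "A0 \<noteq> {}" and loc: "\<And>u. norm u < r \<Longrightarrow> f (xb + u) = (if u \<in> Kc C0 then ereal (m + phr A0 u) else \<infinity>)"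
    using LD unfolding LD_def by auto
  assume sv: "v \<in> subdiff f (xb + u)"
  then obtain mm where "f (xb+u) = ereal mm" using subdiff_finite by blast
  then have uK: "u \<in> Kc C0" using loc[OF u] by (auto split: if_splits)
  have fu: "f (xb + u) = ereal (m + phr A0 u)" using loc[OF u] uK by simp
  have vF: "v \<in> Fs A0 C0" unfolding Fs_def
  proof (intro CollectI ballI)
    fix z assume zK: "z \<in> Kc C0"
    define s where "s = (r - norm u) / (2 * (norm z + 1))"
    have "0 < 2 * (norm z + 1)" by (smt (verit) norm_ge_zero)
    then have s0: "0 < s" unfolding s_def using u by (intro divide_pos_pos) auto
    have "norm (s *\<^sub>R z) < r - norm u"
    proof -
      have "norm (s *\<^sub>R z) = s * norm z" using s0 by simp
      also have "\<dots> < s * (2 * (norm z + 1))" using s0 by (intro mult_strict_left_mono) (auto, smt (verit) norm_ge_zero)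
      also have "\<dots> = r - norm u" unfolding s_def using \<open>0 < 2 * (norm z + 1)\<close> by simp
      finally show ?thesis .
    qed
    then have nr: "norm (u + s *\<^sub>R z) < r" using norm_triangle_ineq[of u "s *\<^sub>R z"] by linarith
    have K2: "u + s *\<^sub>R z \<in> Kc C0" using Kc_add[OF uK Kc_scale[OF zK]] s0 by simp
    have "f (xb + u) + ereal (inner v ((xb + (u + s *\<^sub>R z)) - (xb + u))) \<le> f (xb + (u + s *\<^sub>R z))"
      by (rule subdiff_ineq[OF sv])
    then have "m + phr A0 u + s * inner v z \<le> m + phr A0 (u + s *\<^sub>R z)"
      using fu loc[OF nr] K2 by simp
    moreover have "phr A0 (u + s *\<^sub>R z) \<le> phr A0 u + s * phr A0 z"
      using phr_add[OF fin, of u "s *\<^sub>R z"] phr_scale[OF fin, of s z] s0 by simp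
    ultimately have "s * inner v z \<le> s * phr A0 z" by simp
    then show "inner v z \<le> phr A0 z" using s0 by simp
  qed
  have "inner v u \<le> phr A0 u" using vF uK unfolding Fs_def by auto
  moreover have "phr A0 u \<le> inner v u"
  proof -
    have "norm ((1/2) *\<^sub>R u) = norm u / 2" by simp
    then have nr: "norm ((1/2) *\<^sub>R u) < r" using u norm_ge_zero[of u] by linarith
    have K2: "(1/2) *\<^sub>R u \<in> Kc C0" using Kc_scale[OF uK] by simp
    have "f (xb + u) + ereal (inner v ((xb + (1/2) *\<^sub>R u) - (xb + u))) \<le> f (xb + (1/2) *\<^sub>R u)"
      by (rule subdiff_ineq[OF sv])
    then have "m + phr A0 u - (1/2) * inner v u \<le> m + phr A0 ((1/2) *\<^sub>R u)"
      using fu loc[OF nr] K2 by (simp add: algebra_simps inner_diff_right)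
    then show ?thesis using phr_scale[OF fin, of "1/2" u] by simp
  qed
  ultimately show "u \<in> Kc C0 \<and> v \<in> Fs A0 C0 \<and> inner v u = phr A0 u" using uK vF by simp
next
  have loc: "\<And>u. norm u < r \<Longrightarrow> f (xb + u) = (if u \<in> Kc C0 then ereal (m + phr A0 u) else \<infinity>)"
    and glob1: "\<And>u. u \<in> Kc C0 \<Longrightarrow> ereal (m + phr A0 u) \<le> f (xb + u)"
    and glob2: "\<And>u. u \<notin> Kc C0 \<Longrightarrow> f (xb + u) = \<infinity>"
    using LD unfolding LD_def by auto
  assume H: "u \<in> Kc C0 \<and> v \<in> Fs A0 C0 \<and> inner v u = phr A0 u"
  have fu: "f (xb + u) = ereal (m + phr A0 u)" using loc[OF u] H by simp
  show "v \<in> subdiff f (xb + u)" unfolding subdiff_def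
  proof (intro CollectI conjI allI)
    show "\<bar>f (xb + u)\<bar> \<noteq> \<infinity>" using fu by simp
    fix y
    define y' where "y' = y - xb"
    have y: "y = xb + y'" unfolding y'_def by simp
    show "f (xb + u) + ereal (inner v (y - (xb + u))) \<le> f y"
    proof (cases "y' \<in> Kc C0")
      case True
      have "inner v y' \<le> phr A0 y'" using H True unfolding Fs_def by auto
      then have "f (xb + u) + ereal (inner v (y - (xb + u))) \<le> ereal (m + phr A0 y')"
        using fu H by (simp add: y inner_diff_right)
      also have "\<dots> \<le> f y" using glob1[OF True] y by simp
      finally show ?thesis .
    next
      case False then show ?thesis using glob2 y by simp
    qed
  qed
qed

lemma subd0:
  assumes LD: "LD f xb A0 C0 r m"
  shows "subdiff f xb = Fs A0 C0"
proof -
  have fin: "finite A0" "A0 \<noteq> {}" "0 < r" using LD unfolding LD_def by auto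
  show ?thesis using subd[OF LD, of 0] fin Kc_zero phr_zero[OF fin(1,2)] by auto
qed



lemma ev_cont_less:
  fixes xb :: "'a::real_inner"
  assumes "c \<bullet> xb + e < k"
  shows "eventually (\<lambda>u. c \<bullet> (xb + u) + e < k) (nhds 0)"
proof -
  have "((\<lambda>u. c \<bullet> (xb + u) + e) \<longlongrightarrow> c \<bullet> (xb + 0) + e) (nhds 0)"
    by (intro tendsto_intros filterlim_ident)
  then show ?thesis using assms by (intro order_tendstoD(2)) auto
qed

lemma local_data:
  fixes xb :: "'a::real_inner"
  assumes A: "finite A" "A \<noteq> {}" and B: "finite B" and xb: "xb \<in> pdom B"
  shows "\<exists>A0 C0 r. LD (pform A B) xb A0 C0 r (pmax A xb)"
proof -
  define M where "M = pmax A xb"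
  define A0 where "A0 = {a. \<exists>b. (a,b) \<in> A \<and> inner a xb + b = M}"
  define C0 where "C0 = {c. \<exists>d. (c,d) \<in> B \<and> inner c xb = d}"
  have finA0: "finite A0"
    by (rule finite_subset[of _ "fst ` A"]) (use A in \<open>force simp: A0_def\<close>)+
  have finC0: "finite C0"
    by (rule finite_subset[of _ "fst ` B"]) (use B in \<open>force simp: C0_def\<close>)+
  obtain as bs where asb: "(as,bs) \<in> A" "M = inner as xb + bs"
    using pmax_in[OF A, of xb] M_def by auto
  then have A0ne: "A0 \<noteq> {}" unfolding A0_def by auto
  have asA0: "as \<in> A0" using asb unfolding A0_def by auto
  have glob1: "ereal (M + phr A0 u) \<le> pform A B (xb + u)" if uK: "u \<in> Kc C0" for u
  proof (cases "xb + u \<in> pdom B")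
    case True
    obtain a where a: "a \<in> A0" "phr A0 u = inner a u" using phr_in[OF finA0 A0ne] by blast
    then obtain b where b: "(a,b) \<in> A" "inner a xb + b = M" unfolding A0_def by auto
    have "inner a (xb + u) + b \<le> pmax A (xb + u)" by (rule pmax_ge[OF A(1) b(1)])
    then show ?thesis using True a b unfolding pform_def by (simp add: inner_add_right)
  next
    case False then show ?thesis unfolding pform_def by simp
  qed
  have glob2: "pform A B (xb + u) = \<infinity>" if uK: "u \<notin> Kc C0" for u
  proof -
    obtain c where c: "c \<in> C0" "inner c u > 0" using uK unfolding Kc_def by auto
    then obtain d where "(c,d) \<in> B" "inner c xb = d" unfolding C0_def by auto
    then have "xb + u \<notin> pdom B" using c unfolding pdom_def by (auto simp: inner_add_right intro!: bexI[of _ "(c,d)"])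
    then show ?thesis unfolding pform_def by simp
  qed
  have E1: "eventually (\<lambda>u. \<forall>p\<in>B. inner (fst p) xb < snd p \<longrightarrow> inner (fst p) (xb + u) + 0 < snd p) (nhds 0)"
    using B
  proof (intro eventually_ball_finite ballI)
    fix p assume "p \<in> B"
    show "eventually (\<lambda>u. inner (fst p) xb < snd p \<longrightarrow> inner (fst p) (xb + u) + 0 < snd p) (nhds 0)"
    proof (cases "inner (fst p) xb < snd p")
      case True
      then have "inner (fst p) xb + 0 < snd p" by simp
      then show ?thesis by (rule eventually_mono[OF ev_cont_less]) simp
    qed simp
  qed
  have E2: "eventually (\<lambda>u. \<forall>p\<in>A. inner (fst p) xb + snd p < M \<longrightarrow>
       inner (fst p - as) (xb + u) + (snd p - bs) < 0) (nhds 0)"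
    using A(1)
  proof (intro eventually_ball_finite ballI impI)
    fix p assume "p \<in> A"
    show "eventually (\<lambda>u. inner (fst p) xb + snd p < M \<longrightarrow> inner (fst p - as) (xb + u) + (snd p - bs) < 0) (nhds 0)"
    proof (cases "inner (fst p) xb + snd p < M")
      case True
      then have "inner (fst p - as) xb + (snd p - bs) < 0" using asb by (simp add: inner_diff_left)
      then show ?thesis by (rule eventually_mono[OF ev_cont_less]) simp
    qed simp
  qed
  obtain r where r: "r > 0" "\<And>u. dist u 0 < r \<Longrightarrow> (\<forall>p\<in>B. inner (fst p) xb < snd p \<longrightarrow> inner (fst p) (xb + u) + 0 < snd p) \<and>
      (\<forall>p\<in>A. inner (fst p) xb + snd p < M \<longrightarrow> inner (fst p - as) (xb + u) + (snd p - bs) < 0)"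
    using eventually_conj[OF E1 E2] unfolding eventually_nhds_metric by blast
  have loc: "pform A B (xb + u) = (if u \<in> Kc C0 then ereal (M + phr A0 u) else \<infinity>)" if u: "norm u < r" for u
  proof -
    have ru: "\<forall>p\<in>B. inner (fst p) xb < snd p \<longrightarrow> inner (fst p) (xb + u) < snd p"
      "\<forall>p\<in>A. inner (fst p) xb + snd p < M \<longrightarrow> inner (fst p - as) (xb + u) + (snd p - bs) < 0"
      using r(2)[of u] u by auto
    have dom: "xb + u \<in> pdom B \<longleftrightarrow> u \<in> Kc C0"
    proof
      assume "xb + u \<in> pdom B"
      then show "u \<in> Kc C0" unfolding pdom_def Kc_def C0_def by (force simp: inner_add_right)
    next
      assume uK: "u \<in> Kc C0"
      show "xb + u \<in> pdom B" unfolding pdom_def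
      proof (clarify)
        fix c d assume cd: "(c,d) \<in> B"
        then have le: "inner c xb \<le> d" using xb unfolding pdom_def by auto
        show "inner c (xb + u) \<le> d"
        proof (cases "inner c xb = d")
          case True
          then have "c \<in> C0" using cd unfolding C0_def by auto
          then show ?thesis using uK True unfolding Kc_def by (auto simp: inner_add_right)
        next
          case False
          then show ?thesis using ru(1) cd le by fastforce
        qed
      qed
    qed
    have pm: "pmax A (xb + u) = M + phr A0 u"
    proof (rule antisym)
      show "pmax A (xb + u) \<le> M + phr A0 u"
      proof (subst pmax_le_iff[OF A], clarify)
        fix a b assume ab: "(a,b) \<in> A"
        have le: "inner a xb + b \<le> M" using pmax_ge[OF A(1) ab] M_def by simp
        show "inner a (xb + u) + b \<le> M + phr A0 u"
        proof (cases "inner a xb + b = M")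
          case True
          then have "a \<in> A0" using ab unfolding A0_def by auto
          then show ?thesis using phr_ge[OF finA0, of a u] True by (simp add: inner_add_right)
        next
          case False
          then have "inner (a - as) (xb + u) + (b - bs) < 0" using ru(2) ab le by fastforce
          then have "inner a (xb + u) + b < inner as (xb + u) + bs" by (simp add: inner_diff_left)
          also have "\<dots> = M + inner as u" using asb by (simp add: inner_add_right)
          also have "\<dots> \<le> M + phr A0 u" using phr_ge[OF finA0 asA0] by simp
          finally show ?thesis by simp
        qed
      qed
    next
      obtain a where a: "a \<in> A0" "phr A0 u = inner a u" using phr_in[OF finA0 A0ne] by blast
      then obtain b where b: "(a,b) \<in> A" "inner a xb + b = M" unfolding A0_def by auto
      have "inner a (xb + u) + b \<le> pmax A (xb + u)" by (rule pmax_ge[OF A(1) b(1)])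
      then show "M + phr A0 u \<le> pmax A (xb + u)" using a b by (simp add: inner_add_right)
    qed
    show ?thesis using dom pm unfolding pform_def by simp
  qed
  have "LD (pform A B) xb A0 C0 r M"
    unfolding LD_def using finA0 A0ne finC0 r(1) loc glob1 glob2 xb
    by (auto simp: pform_def M_def)
  then show ?thesis unfolding M_def by blast
qed



lemma sef_ev:
  fixes f :: "'a::real_inner \<Rightarrow> ereal"
  assumes "0 < d"
  shows "eventually (\<lambda>(t,x,v). 0 < t \<and> t < d \<and> norm (x - xb) < d \<and> norm (v - vb) < d \<and> v \<in> subdiff f x)
           (strict_epi_filter f xb vb)"
proof -
  have "eventually (\<lambda>(t,x,v). 0 < t \<and> t < d \<and> norm (x - xb) < d \<and> norm (v - vb) < d \<and> v \<in> subdiff f x)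
           (at (0, xb, vb) within {(t, x, v). 0 < t \<and> v \<in> subdiff f x})"
    unfolding eventually_at
  proof (intro exI[of _ d] conjI ballI impI)
    fix p :: "real \<times> 'a \<times> 'a"
    assume p: "p \<in> {(t, x, v). 0 < t \<and> v \<in> subdiff f x}" and pd: "p \<noteq> (0, xb, vb) \<and> dist p (0, xb, vb) < d"
    obtain t x v where pe: "p = (t,x,v)" by (cases p) auto
    have "dist t 0 \<le> dist p (0,xb,vb)" using dist_fst_le[of p "(0,xb,vb)"] pe by simp
    moreover have "dist (x,v) (xb,vb) \<le> dist p (0,xb,vb)" using dist_snd_le[of p "(0,xb,vb)"] pe by simp
    moreover have "dist x xb \<le> dist (x,v) (xb,vb)" using dist_fst_le[of "(x,v)" "(xb,vb)"] by simp
    moreover have "dist v vb \<le> dist (x,v) (xb,vb)" using dist_snd_le[of "(x,v)" "(xb,vb)"] by simp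
    ultimately show "case p of (t, x, v) \<Rightarrow> 0 < t \<and> t < d \<and> norm (x - xb) < d \<and> norm (v - vb) < d \<and> v \<in> subdiff f x"
      using p pd pe by (auto simp: dist_norm)
  qed (use assms in auto)
  then show ?thesis unfolding strict_epi_filter_def by (rule filter_leD[rotated]) simp
qed

lemma path_le:
  fixes f :: "'a::real_inner \<Rightarrow> ereal"
  assumes X: "(X \<longlongrightarrow> xb) (at_right 0)" and V: "(V \<longlongrightarrow> vb) (at_right 0)"
    and fX: "((\<lambda>s. f (X s)) \<longlongrightarrow> f xb) (at_right 0)"
    and ev: "eventually (\<lambda>s. V s \<in> subdiff f (X s)) (at_right (0::real))"
  shows "filtermap (\<lambda>s. (s, X s, V s)) (at_right 0) \<le> strict_epi_filter f xb vb"
  unfolding strict_epi_filter_def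
proof (rule le_infI)
  have "filterlim (\<lambda>s. (s, X s, V s)) (at (0, xb, vb) within {(t, x, v). 0 < t \<and> v \<in> subdiff f x}) (at_right 0)"
    unfolding filterlim_at
  proof
    show "\<forall>\<^sub>F s in at_right 0. (s, X s, V s) \<in> {(t, x, v). 0 < t \<and> v \<in> subdiff f x} \<and> (s, X s, V s) \<noteq> (0, xb, vb)"
      using eventually_conj[OF ev eventually_at_right_less] by (rule eventually_mono) auto
    show "((\<lambda>s. (s, X s, V s)) \<longlongrightarrow> (0, xb, vb)) (at_right 0)"
      by (intro tendsto_Pair X V tendsto_ident_at)
  qed
  then show "filtermap (\<lambda>s. (s, X s, V s)) (at_right 0) \<le> at (0, xb, vb) within {(t, x, v). 0 < t \<and> v \<in> subdiff f x}"
    unfolding filterlim_def .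
  have "filtermap (\<lambda>(t, x, v). f x) (filtermap (\<lambda>s. (s, X s, V s)) (at_right 0)) \<le> nhds (f xb)"
    using fX unfolding filterlim_def by (simp add: filtermap_filtermap)
  then show "filtermap (\<lambda>s. (s, X s, V s)) (at_right 0) \<le> filtercomap (\<lambda>(t, x, v). f x) (nhds (f xb))"
    by (simp add: filtermap_le_iff_le_filtercomap)
qed

lemma sef_nontriv:
  fixes f :: "'a::real_inner \<Rightarrow> ereal"
  assumes "vb \<in> subdiff f xb"
  shows "strict_epi_filter f xb vb \<noteq> bot"
proof
  assume "strict_epi_filter f xb vb = bot"
  moreover have "filtermap (\<lambda>s. (s, xb, vb)) (at_right 0) \<le> strict_epi_filter f xb vb"
    by (rule path_le) (use assms in auto)
  ultimately have "filtermap (\<lambda>s. (s, xb, vb)) (at_right (0::real)) = bot" by (simp add: bot_unique)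
  then show False by (simp add: filtermap_bot_iff)
qed

lemma qlb:
  fixes f :: "'a::real_inner \<Rightarrow> ereal"
  assumes fx: "f x = ereal a" and t: "0 < t" and le: "ereal (a + t * inner v w + t * c) \<le> f (x + t *\<^sub>R w)"
  shows "ereal (2 * c / t) \<le> diffq2 f x v t w"
proof (cases "f (x + t *\<^sub>R w)")
  case (real y)
  have "2 * c / t = (t * c) * (2 / t\<^sup>2)" using t by (simp add: power2_eq_square field_simps)
  also have "\<dots> \<le> (y - a - t * inner v w) * (2 / t\<^sup>2)"
    using le real t by (intro mult_right_mono) auto
  finally show ?thesis unfolding diffq2_def using fx real by simp
next
  case PInf
  then show ?thesis unfolding diffq2_def using fx t by simp
next
  case MInf
  then show ?thesis using le by simp
qed

lemma qeq:
  fixes f :: "'a::real_inner \<Rightarrow> ereal"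
  assumes fx: "f x = ereal a" and e: "f (x + t *\<^sub>R w) = ereal (a + t * inner v w)"
  shows "diffq2 f x v t w = 0"
  unfolding diffq2_def using fx e by (simp add: zero_ereal_def)

lemma q0:
  fixes f :: "'a::real_inner \<Rightarrow> ereal"
  assumes sv: "v \<in> subdiff f x" and t: "0 < t"
  shows "0 \<le> diffq2 f x v t w"
proof -
  obtain a where fx: "f x = ereal a" using subdiff_finite[OF sv] by blast
  have "f x + ereal (inner v ((x + t *\<^sub>R w) - x)) \<le> f (x + t *\<^sub>R w)" by (rule subdiff_ineq[OF sv])
  then have "ereal (a + t * inner v w + t * 0) \<le> f (x + t *\<^sub>R w)" using fx by simp
  from qlb[OF fx t this] show ?thesis by (simp add: zero_ereal_def)
qed

lemma epi_mem: "(w, r) \<in> epi h \<longleftrightarrow> h w \<le> ereal r" unfolding epi_def by simp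

lemma not_freq: "eventually (\<lambda>x. \<not> P x) F \<Longrightarrow> frequently P F \<Longrightarrow> False"
  unfolding frequently_def by simp

lemma ri_ext:
  fixes S :: "'a::euclidean_space set"
  assumes "v \<in> rel_interior S" "y \<in> S"
  shows "\<exists>e>0. v + e *\<^sub>R (v - y) \<in> S"
proof -
  obtain d where d: "d > 0" "ball v d \<inter> affine hull S \<subseteq> S"
    using assms(1) unfolding mem_rel_interior_ball by blast
  define e where "e = d / (2 * (norm (v - y) + 1))"
  have den: "0 < 2 * (norm (v - y) + 1)" by (smt (verit) norm_ge_zero)
  have e0: "e > 0" unfolding e_def using d(1) den by (rule divide_pos_pos)
  have lt: "norm (v - y) < 2 * (norm (v - y) + 1)" by (smt (verit) norm_ge_zero)
  have "norm (e *\<^sub>R (v - y)) = e * norm (v - y)" using e0 by simp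
  also have "\<dots> < e * (2 * (norm (v - y) + 1))" using lt e0 by (rule mult_strict_left_mono)
  also have "\<dots> = d" unfolding e_def using den by simp
  finally have "v + e *\<^sub>R (v - y) \<in> ball v d" by (simp add: dist_norm)
  moreover have "v + e *\<^sub>R (v - y) \<in> affine hull S"
  proof -
    have "v \<in> S" using assms(1) rel_interior_subset by auto
    then have vS: "v \<in> affine hull S" by (rule hull_inc)
    have yS: "y \<in> affine hull S" using assms(2) by (rule hull_inc)
    have "(1 + e) *\<^sub>R v + (- e) *\<^sub>R y \<in> affine hull S"
      by (rule mem_affine[OF affine_affine_hull vS yS]) simp
    moreover have "(1 + e) *\<^sub>R v + (- e) *\<^sub>R y = v + e *\<^sub>R (v - y)" by (simp add: algebra_simps)
    ultimately show ?thesis by simp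
  qed
  ultimately have "v + e *\<^sub>R (v - y) \<in> ball v d \<inter> affine hull S" by (rule IntI)
  then have "v + e *\<^sub>R (v - y) \<in> S" using d(2) by (rule subsetD[rotated])
  then show ?thesis using e0 by blast
qed

lemma ri_normal:
  fixes S :: "'a::euclidean_space set"
  assumes "v \<in> rel_interior S" "\<forall>f\<in>S. inner f u \<le> inner v u"
  shows "\<forall>f\<in>S. inner f u = inner v u"
proof
  fix y assume y: "y \<in> S"
  obtain e where e: "e > 0" "v + e *\<^sub>R (v - y) \<in> S" using ri_ext[OF assms(1) y] by blast
  have "inner (v + e *\<^sub>R (v - y)) u \<le> inner v u" using assms(2) e(2) by blast
  then have "e * (inner v u - inner y u) \<le> 0" by (simp add: inner_add_left inner_diff_left)
  then have "inner v u \<le> inner y u" using e(1) by (simp add: mult_le_0_iff)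
  then show "inner y u = inner v u" using assms(2) y by force
qed

lemma ri_nbhd:
  fixes S :: "'a::euclidean_space set"
  assumes "v \<in> rel_interior S"
  shows "\<exists>e>0. \<forall>y\<in>S. norm (y - v) < e \<longrightarrow> y \<in> rel_interior S"
proof -
  obtain d where d: "d > 0" "ball v d \<inter> affine hull S \<subseteq> S"
    using assms(1) unfolding mem_rel_interior_ball by blast
  show ?thesis
  proof (intro exI[of _ "d/2"] conjI ballI impI)
    fix y assume y: "y \<in> S" "norm (y - v) < d/2"
    have "ball y (d/2) \<subseteq> ball v d"
    proof
      fix z assume "z \<in> ball y (d/2)"
      then have "dist y z < d/2" by simp
      moreover have "dist v y < d/2" using y(2) by (simp add: dist_norm norm_minus_commute)
      ultimately show "z \<in> ball v d" using dist_triangle[of v z y] by simp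
    qed
    then show "y \<in> rel_interior S" unfolding mem_rel_interior_ball using y d by (intro conjI exI[of _ "d/2"]) auto
  qed (use d in auto)
qed



lemma strict_ri:
  fixes f :: "'a::euclidean_space \<Rightarrow> ereal"
  assumes LD: "LD f xb A0 C0 r m" and vri: "vb \<in> rel_interior (Fs A0 C0)"
  shows "strictly_twice_epi_diff f xb vb"
proof -
  have fin: "finite A0" "A0 \<noteq> {}" "0 < r" and fxb: "f xb = ereal m"
    and loc: "\<And>u. norm u < r \<Longrightarrow> f (xb + u) = (if u \<in> Kc C0 then ereal (m + phr A0 u) else \<infinity>)"
    using LD unfolding LD_def by auto
  define F where "F = Fs A0 C0"
  have vri': "vb \<in> rel_interior F" using vri F_def by simp
  have vbF: "vb \<in> F" using vri' rel_interior_subset by auto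
  have sdF: "subdiff f xb = F" using subd0[OF LD] F_def by simp
  define K0 where "K0 = {u. \<forall>g\<in>F. inner g u = inner vb u}"
  have NK: "(u \<in> Kc C0 \<and> inner v u = phr A0 u) \<longleftrightarrow> u \<in> K0" if vr: "v \<in> rel_interior F" for v u
  proof -
    have vF: "v \<in> F" using vr rel_interior_subset by auto
    have "(u \<in> Kc C0 \<and> inner v u = phr A0 u) \<longleftrightarrow> (\<forall>g\<in>F. inner g u \<le> inner v u)"
      using nchar[OF fin(1,2)] vF F_def by auto
    also have "\<dots> \<longleftrightarrow> u \<in> K0"
    proof
      assume H: "\<forall>g\<in>F. inner g u \<le> inner v u"
      then have E: "\<forall>g\<in>F. inner g u = inner v u" using ri_normal[OF vr] by blast
      then show "u \<in> K0" unfolding K0_def using vbF by auto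
    next
      assume "u \<in> K0" then show "\<forall>g\<in>F. inner g u \<le> inner v u" using vF unfolding K0_def by auto
    qed
    finally show ?thesis .
  qed
  have K0_lin: "u + t *\<^sub>R w \<in> K0" if "u \<in> K0" "w \<in> K0" for u w t
    using that unfolding K0_def by (simp add: inner_add_right)
  obtain ep where ep: "ep > 0" "\<And>v. v \<in> F \<Longrightarrow> norm (v - vb) < ep \<Longrightarrow> v \<in> rel_interior F"
    using ri_nbhd[OF vri'] by blast
  define d0 where "d0 = min (r/2) ep"
  have d0: "d0 > 0" "d0 \<le> r/2" "d0 \<le> ep" unfolding d0_def using fin ep by auto
  have basic: "x - xb \<in> K0 \<and> v \<in> rel_interior F \<and> f x = ereal (m + inner v (x - xb))"
    if "norm (x - xb) < d0" "norm (v - vb) < d0" "v \<in> subdiff f x" for x v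
  proof -
    define u where "u = x - xb"
    have x: "x = xb + u" unfolding u_def by simp
    have nu: "norm u < r" using that(1) d0 fin u_def by simp
    have s: "u \<in> Kc C0 \<and> v \<in> F \<and> inner v u = phr A0 u" using subd[OF LD nu, of v] that(3) x F_def by simp
    have vr: "v \<in> rel_interior F" using ep(2)[of v] s that(2) d0 by simp
    have "u \<in> K0" using NK[OF vr, of u] s by simp
    moreover have "f x = ereal (m + inner v u)" using loc[OF nu] s x by simp
    ultimately show ?thesis using vr u_def by simp
  qed
  define h where "h = (\<lambda>w. if w \<in> K0 then (0::ereal) else \<infinity>)"
  have epih: "epi h = {(w,\<rho>). w \<in> K0 \<and> 0 \<le> \<rho>}" by (auto simp: epi_def h_def zero_ereal_def split: if_splits)
  define C where "C = (\<lambda>(t::real, x::'a, v::'a). epi (diffq2 f x v t))"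
  define Phi where "Phi = strict_epi_filter f xb vb"
  have Cmem: "(w, \<rho>) \<in> C (t, x, v) \<longleftrightarrow> diffq2 f x v t w \<le> ereal \<rho>" for w \<rho> t x v
    unfolding C_def epi_def by simp
  have sub1: "epi h \<subseteq> PK_liminf C Phi"
  proof (clarsimp simp: epih PK_liminf_def)
    fix w :: 'a and \<rho> :: real and U
    assume wK: "w \<in> K0" and r0: "0 \<le> \<rho>" and U: "open U" "(w, \<rho>) \<in> U"
    define d where "d = min d0 (r / (2 * (norm w + 1)))"
    have den: "0 < 2 * (norm w + 1)" by (smt (verit) norm_ge_zero)
    have d: "d > 0" unfolding d_def using d0 fin den by (auto intro: divide_pos_pos)
    show "\<forall>\<^sub>F p in Phi. C p \<inter> U \<noteq> {}"
      using sef_ev[OF d, where f=f and xb=xb and vb=vb] unfolding Phi_def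
    proof (rule eventually_mono)
      fix p :: "real \<times> 'a \<times> 'a" assume "case p of (t, x, v) \<Rightarrow> 0 < t \<and> t < d \<and> norm (x - xb) < d \<and> norm (v - vb) < d \<and> v \<in> subdiff f x"
      then obtain t x v where p: "p = (t,x,v)" and t: "0 < t" "t < d" and xv: "norm (x - xb) < d" "norm (v - vb) < d"
        and sv: "v \<in> subdiff f x" by (cases p) auto
      have dd: "d \<le> d0" "d \<le> r / (2 * (norm w + 1))" unfolding d_def by auto
      have b: "x - xb \<in> K0 \<and> v \<in> rel_interior F \<and> f x = ereal (m + inner v (x - xb))"
        using basic[of x v] xv sv dd by simp
      define u where "u = x - xb"
      have "t * norm w \<le> t * (norm w + 1)" using t by simp
      also have "\<dots> < r / (2 * (norm w + 1)) * (norm w + 1)"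
        using t dd den by (intro mult_strict_right_mono) (linarith, smt (verit) norm_ge_zero)
      also have "\<dots> = r / 2" using den by (simp add: field_simps)
      finally have tw: "t * norm w < r / 2" .
      have "norm (u + t *\<^sub>R w) \<le> norm u + t * norm w"
        using norm_triangle_ineq[of u "t *\<^sub>R w"] t by simp
      also have "\<dots> < r" using tw xv dd d0 u_def by simp
      finally have nr: "norm (u + t *\<^sub>R w) < r" .
      have K: "u + t *\<^sub>R w \<in> K0" using K0_lin[of u w t] b wK u_def by simp
      then have N: "u + t *\<^sub>R w \<in> Kc C0 \<and> inner v (u + t *\<^sub>R w) = phr A0 (u + t *\<^sub>R w)"
        using NK[of v "u + t *\<^sub>R w"] b by simp
      have "f (x + t *\<^sub>R w) = f (xb + (u + t *\<^sub>R w))" unfolding u_def by (simp add: algebra_simps)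
      also have "\<dots> = ereal (m + inner v u + t * inner v w)"
        using loc[OF nr] N by (simp add: inner_add_right)
      finally have "f (x + t *\<^sub>R w) = ereal ((m + inner v u) + t * inner v w)" .
      then have "diffq2 f x v t w = 0" using qeq[of f x "m + inner v u"] b u_def by simp
      then have "(w, \<rho>) \<in> C p" using Cmem p r0 by (simp add: zero_ereal_def)
      then show "C p \<inter> U \<noteq> {}" using U by blast
    qed
  qed
  have sub2: "PK_limsup C Phi \<subseteq> epi h"
  proof
    fix P assume P: "P \<in> PK_limsup C Phi"
    obtain w \<rho> where Pe: "P = (w, \<rho>)" by (cases P) auto
    have freq: "\<exists>\<^sub>F p in Phi. C p \<inter> U \<noteq> {}" if "open U" "(w, \<rho>) \<in> U" for U
      using P Pe that unfolding PK_limsup_def by auto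
    have r0: "0 \<le> \<rho>"
    proof (rule ccontr)
      assume rn: "\<not> 0 \<le> \<rho>"
      let ?U = "(UNIV :: 'a set) \<times> {..<(0::real)}"
      have "open ?U" by (intro open_Times) auto
      from freq[OF this] have fr: "\<exists>\<^sub>F p in Phi. C p \<inter> ?U \<noteq> {}" using rn by auto
      have "\<forall>\<^sub>F p in Phi. \<not> (C p \<inter> ?U \<noteq> {})"
        using sef_ev[OF zero_less_one, where f=f and xb=xb and vb=vb] unfolding Phi_def
      proof (rule eventually_mono)
        fix p :: "real \<times> 'a \<times> 'a" assume "case p of (t, x, v) \<Rightarrow> 0 < t \<and> t < 1 \<and> norm (x - xb) < 1 \<and> norm (v - vb) < 1 \<and> v \<in> subdiff f x"
        then obtain t x v where p: "p = (t,x,v)" and t: "0 < t" and sv: "v \<in> subdiff f x" by (cases p) auto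
        show "\<not> (C p \<inter> ?U \<noteq> {})"
        proof
          assume "C p \<inter> ?U \<noteq> {}"
          then obtain w' \<rho>' where "(w', \<rho>') \<in> C p" "\<rho>' < 0" by auto
          then have A: "diffq2 f x v t w' \<le> ereal \<rho>'" using Cmem p by simp
          have B: "0 \<le> diffq2 f x v t w'" by (rule q0[OF sv t])
          from B A have "0 \<le> ereal \<rho>'" by (rule order.trans)
          then show False using \<open>\<rho>' < 0\<close> by simp
        qed
      qed
      from not_freq[OF this fr] show False .
    qed
    have wK: "w \<in> K0"
    proof (rule ccontr)
      assume wn: "w \<notin> K0"
      have "\<not> (\<forall>g\<in>F. inner g w \<le> inner vb w)"
      proof
        assume "\<forall>g\<in>F. inner g w \<le> inner vb w"
        then have "\<forall>g\<in>F. inner g w = inner vb w" using ri_normal[OF vri'] by blast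
        then show False using wn K0_def by auto
      qed
      then obtain f2 where f2: "f2 \<in> F" "inner f2 w > inner vb w" by auto
      define ga where "ga = inner (f2 - vb) w"
      have ga: "ga > 0" using f2 unfolding ga_def by (simp add: inner_diff_left)
      define eta where "eta = min 1 (ga / (4 * (norm (f2 - vb) + 1)))"
      have den1: "0 < 4 * (norm (f2 - vb) + 1)" by (smt (verit) norm_ge_zero)
      have eta: "eta > 0" "eta \<le> 1" "eta \<le> ga / (4 * (norm (f2 - vb) + 1))"
        unfolding eta_def using ga den1 by (auto intro: divide_pos_pos)
      let ?U = "ball w eta \<times> {..<\<rho> + 1}"
      have "open ?U" by (intro open_Times) auto
      from freq[OF this] have fr: "\<exists>\<^sub>F p in Phi. C p \<inter> ?U \<noteq> {}" using eta by auto
      define d where "d = min d0 (min (ga / (4 * (norm w + 2))) (ga / (\<bar>\<rho>\<bar> + 1)))"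
      have den2: "0 < 4 * (norm w + 2)" by (smt (verit) norm_ge_zero)
      have d: "d > 0" "d \<le> d0" "d \<le> ga / (4 * (norm w + 2))" "d \<le> ga / (\<bar>\<rho>\<bar> + 1)"
        unfolding d_def using d0 ga den2 by (auto intro!: divide_pos_pos)
      have "\<forall>\<^sub>F p in Phi. \<not> (C p \<inter> ?U \<noteq> {})"
        using sef_ev[OF d(1), where f=f and xb=xb and vb=vb] unfolding Phi_def
      proof (rule eventually_mono)
        fix p :: "real \<times> 'a \<times> 'a" assume "case p of (t, x, v) \<Rightarrow> 0 < t \<and> t < d \<and> norm (x - xb) < d \<and> norm (v - vb) < d \<and> v \<in> subdiff f x"
        then obtain t x v where p: "p = (t,x,v)" and t: "0 < t" "t < d" and xv: "norm (x - xb) < d" "norm (v - vb) < d"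
          and sv: "v \<in> subdiff f x" by (cases p) auto
        have b: "x - xb \<in> K0 \<and> v \<in> rel_interior F \<and> f x = ereal (m + inner v (x - xb))"
          using basic[of x v] xv sv d by simp
        define u where "u = x - xb"
        have vF: "v \<in> F" using b rel_interior_subset by auto
        show "\<not> (C p \<inter> ?U \<noteq> {})"
        proof
          assume "C p \<inter> ?U \<noteq> {}"
          then obtain w' \<rho>' where in1: "(w', \<rho>') \<in> C p" and w': "dist w w' < eta" and r': "\<rho>' < \<rho> + 1" by auto
          have q: "diffq2 f x v t w' \<le> ereal \<rho>'" using in1 Cmem p by simp
          have e1: "\<bar>inner (f2 - vb) (w' - w)\<bar> \<le> ga / 4"
          proof -
            have "\<bar>inner (f2 - vb) (w' - w)\<bar> \<le> norm (f2 - vb) * norm (w' - w)" by (rule Cauchy_Schwarz_ineq2)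
            also have "\<dots> \<le> norm (f2 - vb) * eta"
              using w' by (intro mult_left_mono) (auto simp: dist_norm norm_minus_commute)
            also have "\<dots> \<le> (norm (f2 - vb) + 1) * (ga / (4 * (norm (f2 - vb) + 1)))"
              using eta by (intro mult_mono) auto
            also have "\<dots> = ga / 4" using den1 by (simp add: field_simps)
            finally show ?thesis .
          qed
          have nw': "norm w' \<le> norm w + 1"
          proof -
            have "norm w' \<le> norm w + norm (w' - w)" by (metis add_diff_cancel_left' norm_triangle_ineq diff_add_cancel)
            moreover have "norm (w' - w) < eta" using w' by (simp add: dist_norm norm_minus_commute)
            ultimately show ?thesis using eta by simp
          qed
          have e2: "\<bar>inner (v - vb) w'\<bar> \<le> ga / 4"
          proof -
            have "\<bar>inner (v - vb) w'\<bar> \<le> norm (v - vb) * norm w'" by (rule Cauchy_Schwarz_ineq2)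
            also have "\<dots> \<le> (ga / (4 * (norm w + 2))) * (norm w + 2)"
              using xv d nw' by (intro mult_mono) auto
            also have "\<dots> = ga / 4" using den2 by (simp add: field_simps)
            finally show ?thesis .
          qed
          define c where "c = inner (f2 - v) w'"
          have "c = ga + inner (f2 - vb) (w' - w) - inner (v - vb) w'"
            unfolding c_def ga_def by (simp add: inner_diff_left inner_diff_right)
          then have c: "c \<ge> ga / 2" using e1 e2 by linarith
          have f2u: "inner f2 u = inner v u" using b vF f2(1) unfolding K0_def u_def by auto
          have "f xb + ereal (inner f2 ((x + t *\<^sub>R w') - xb)) \<le> f (x + t *\<^sub>R w')"
            using subdiff_ineq[of f2 f xb] f2(1) sdF by simp
          moreover have "inner f2 ((x + t *\<^sub>R w') - xb) = inner v u + t * inner v w' + t * c"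
            unfolding c_def u_def using f2u u_def by (simp add: inner_add_right inner_diff_left algebra_simps)
          ultimately have "ereal ((m + inner v u) + t * inner v w' + t * c) \<le> f (x + t *\<^sub>R w')"
            using fxb by (simp add: add.assoc)
          then have "ereal (2 * c / t) \<le> diffq2 f x v t w'"
            using qlb[of f x "m + inner v u" t v w' c] b u_def t by simp
          then have "2 * c / t \<le> \<rho>'" using q by (meson ereal_less_eq(3) order.trans)
          moreover have "ga / t > \<bar>\<rho>\<bar> + 1"
          proof -
            have "t * (\<bar>\<rho>\<bar> + 1) < d * (\<bar>\<rho>\<bar> + 1)" using t by (intro mult_strict_right_mono) auto
            also have "\<dots> \<le> ga" using d(4) by (simp add: le_divide_eq)
            finally show ?thesis using t by (simp add: field_simps)
          qed
          moreover have "ga / t \<le> 2 * c / t" using c t by (simp add: divide_right_mono)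
          ultimately show False using r' by linarith
        qed
      qed
      from not_freq[OF this fr] show False .
    qed
    show "P \<in> epi h" using Pe wK r0 epih by auto
  qed
  have nt: "Phi \<noteq> bot" unfolding Phi_def using sef_nontriv[of vb f xb] vbF sdF by simp
  have sub3: "PK_liminf C Phi \<subseteq> PK_limsup C Phi"
    unfolding PK_liminf_def PK_limsup_def using eventually_frequently[OF nt] by auto
  have "PK_converges C Phi (epi h)"
    unfolding PK_converges_def using sub1 sub2 sub3 by blast
  then show ?thesis unfolding strictly_twice_epi_diff_def C_def Phi_def using vbF sdF by blast
qed



lemma ev_right_small: "0 < c \<Longrightarrow> eventually (\<lambda>s. 0 < s \<and> s < c) (at_right (0::real))"
  unfolding eventually_at_right_field by (intro exI[of _ c]) auto

lemma freq_mono: "F1 \<le> F2 \<Longrightarrow> frequently P F1 \<Longrightarrow> frequently P F2"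
  unfolding frequently_def using filter_leD by blast

lemma notstrict:
  fixes f :: "'a::euclidean_space \<Rightarrow> ereal"
  assumes LD: "LD f xb A0 C0 r m" and vF: "vb \<in> Fs A0 C0" and vn: "vb \<notin> rel_interior (Fs A0 C0)"
  shows "\<not> strictly_twice_epi_diff f xb vb"
proof
  assume st: "strictly_twice_epi_diff f xb vb"
  have fin: "finite A0" "A0 \<noteq> {}" "0 < r" and fxb: "f xb = ereal m"
    and loc: "\<And>u. norm u < r \<Longrightarrow> f (xb + u) = (if u \<in> Kc C0 then ereal (m + phr A0 u) else \<infinity>)"
    using LD unfolding LD_def by auto
  define F where "F = Fs A0 C0"
  have sdF: "subdiff f xb = F" using subd0[OF LD] F_def by simp
  define C where "C = (\<lambda>(t::real, x::'a, v::'a). epi (diffq2 f x v t))"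
  define Phi where "Phi = strict_epi_filter f xb vb"
  have Cmem: "(w, \<rho>) \<in> C (t, x, v) \<longleftrightarrow> diffq2 f x v t w \<le> ereal \<rho>" for w \<rho> t x v
    unfolding C_def epi_def by simp
  obtain h where conv: "PK_converges C Phi (epi h)"
    using st unfolding strictly_twice_epi_diff_def C_def Phi_def by blast
  have cvx: "convex F" unfolding F_def by (rule convex_Fs)
  obtain a where a: "a \<noteq> 0" "\<And>y. y \<in> F \<Longrightarrow> a \<bullet> vb \<le> a \<bullet> y" "\<And>y. y \<in> rel_interior F \<Longrightarrow> a \<bullet> vb < a \<bullet> y"
    using supporting_hyperplane_rel_boundary[OF cvx, of vb] vF vn F_def by auto
  have "rel_interior F \<noteq> {}" using rel_interior_eq_empty[OF cvx] vF F_def by auto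
  then obtain f0 where f0r: "f0 \<in> rel_interior F" by auto
  then have f0: "f0 \<in> F" "a \<bullet> vb < a \<bullet> f0" using a(3) rel_interior_subset by auto
  define u1 where "u1 = - a"
  have "\<forall>g\<in>F. inner g u1 \<le> inner vb u1" using a(2) unfolding u1_def by (simp add: inner_commute)
  then have N1: "u1 \<in> Kc C0 \<and> inner vb u1 = phr A0 u1" using nchar[OF fin(1,2)] vF F_def by auto
  define ga where "ga = inner (f0 - vb) (- u1)"
  have ga: "ga > 0" using f0 unfolding ga_def u1_def by (simp add: inner_diff_right inner_commute)
  define X where "X = (\<lambda>s::real. xb + s *\<^sub>R u1)"
  have den0: "0 < norm u1 + 1" by (smt (verit) norm_ge_zero)
  have evs: "eventually (\<lambda>s. 0 < s \<and> s < r / (norm u1 + 1)) (at_right (0::real))"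
    using fin den0 by (intro ev_right_small divide_pos_pos)
  have path1_pt: "f (X s) = ereal (m + s * inner vb u1) \<and> vb \<in> subdiff f (X s)"
    if s: "0 < s" "s < r / (norm u1 + 1)" for s
  proof -
    have "s * norm u1 \<le> s * (norm u1 + 1)" using s by simp
    also have "\<dots> < r" using s den0 by (simp add: pos_less_divide_eq)
    finally have nr: "norm (s *\<^sub>R u1) < r" using s by simp
    have K: "s *\<^sub>R u1 \<in> Kc C0" using N1 s by (intro Kc_scale) auto
    have ph: "inner vb (s *\<^sub>R u1) = phr A0 (s *\<^sub>R u1)" using phr_scale[OF fin(1,2)] N1 s by simp
    have "vb \<in> subdiff f (X s)" using subd[OF LD nr, of vb] K ph vF unfolding X_def by simp
    moreover have "f (X s) = ereal (m + s * inner vb u1)" using loc[OF nr] K ph unfolding X_def by simp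
    ultimately show ?thesis by simp
  qed
  have le1: "filtermap (\<lambda>s. (s, X s, vb)) (at_right 0) \<le> Phi"
    unfolding Phi_def
  proof (rule path_le)
    have "(X \<longlongrightarrow> xb + 0 *\<^sub>R u1) (at_right 0)" unfolding X_def by (intro tendsto_intros tendsto_ident_at)
    then show "(X \<longlongrightarrow> xb) (at_right 0)" by simp
    show "((\<lambda>s. vb) \<longlongrightarrow> vb) (at_right 0)" by simp
    have "((\<lambda>s. ereal (m + s * inner vb u1)) \<longlongrightarrow> ereal (m + 0 * inner vb u1)) (at_right 0)"
      unfolding lim_ereal by (intro tendsto_intros tendsto_ident_at)
    then have "((\<lambda>s. ereal (m + s * inner vb u1)) \<longlongrightarrow> f xb) (at_right 0)" using fxb by simp
    then show "((\<lambda>s. f (X s)) \<longlongrightarrow> f xb) (at_right 0)"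
      by (rule Lim_transform_eventually) (use evs path1_pt in \<open>auto elim: eventually_mono\<close>)
    show "\<forall>\<^sub>F s in at_right 0. vb \<in> subdiff f (X s)" using evs path1_pt by (auto elim: eventually_mono)
  qed
  have P0sup: "(- u1, 0) \<in> PK_limsup C Phi"
    unfolding PK_limsup_def
  proof (intro CollectI allI impI, elim conjE)
    fix U assume U: "open U" "(- u1, 0::real) \<in> U"
    have "eventually (\<lambda>s. C (s, X s, vb) \<inter> U \<noteq> {}) (at_right 0)"
      using evs
    proof (rule eventually_mono)
      fix s :: real assume s: "0 < s \<and> s < r / (norm u1 + 1)"
      have fX: "f (X s) = ereal (m + s * inner vb u1)" using path1_pt s by simp
      have "f (X s + s *\<^sub>R (- u1)) = ereal ((m + s * inner vb u1) + s * inner vb (- u1))"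
        unfolding X_def using fxb by simp
      then have "diffq2 f (X s) vb s (- u1) = 0" using qeq[of f "X s" "m + s * inner vb u1" s "- u1" vb] fX by simp
      then have "(- u1, 0) \<in> C (s, X s, vb)" using Cmem by (simp add: zero_ereal_def)
      then show "C (s, X s, vb) \<inter> U \<noteq> {}" using U by blast
    qed
    then have "frequently (\<lambda>s. C (s, X s, vb) \<inter> U \<noteq> {}) (at_right 0)"
      by (intro eventually_frequently) auto
    then have "frequently (\<lambda>p. C p \<inter> U \<noteq> {}) (filtermap (\<lambda>s. (s, X s, vb)) (at_right 0))"
      by (simp add: frequently_filtermap)
    then show "\<exists>\<^sub>F p in Phi. C p \<inter> U \<noteq> {}" by (rule freq_mono[OF le1])
  qed
  then have P0inf: "(- u1, 0) \<in> PK_liminf C Phi" using conv unfolding PK_converges_def by simp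
  define eta where "eta = min 1 (ga / (2 * (norm (f0 - vb) + 1)))"
  have den1: "0 < 2 * (norm (f0 - vb) + 1)" by (smt (verit) norm_ge_zero)
  have eta: "eta > 0" "eta \<le> ga / (2 * (norm (f0 - vb) + 1))"
    unfolding eta_def using ga den1 by (auto intro: divide_pos_pos)
  let ?U = "ball (- u1) eta \<times> {..<(1::real)}"
  have "open ?U" by (intro open_Times) auto
  then have ev1: "eventually (\<lambda>p. C p \<inter> ?U \<noteq> {}) Phi"
    using P0inf eta unfolding PK_liminf_def by auto
  have le2: "filtermap (\<lambda>s. (s, xb, vb)) (at_right 0) \<le> Phi"
    unfolding Phi_def by (rule path_le) (use vF sdF F_def in auto)
  have ev2: "eventually (\<lambda>s. C (s, xb, vb) \<inter> ?U \<noteq> {}) (at_right 0)"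
    using filter_leD[OF le2 ev1] by (simp add: eventually_filtermap)
  have ev3: "eventually (\<lambda>s. \<not> (C (s, xb, vb) \<inter> ?U \<noteq> {})) (at_right 0)"
    using ev_right_small[OF ga]
  proof (rule eventually_mono)
    fix s :: real assume s: "0 < s \<and> s < ga"
    show "\<not> (C (s, xb, vb) \<inter> ?U \<noteq> {})"
    proof
      assume "C (s, xb, vb) \<inter> ?U \<noteq> {}"
      then obtain w' \<rho>' where in1: "(w', \<rho>') \<in> C (s, xb, vb)" and w': "dist (- u1) w' < eta" and r': "\<rho>' < 1" by auto
      have q: "diffq2 f xb vb s w' \<le> ereal \<rho>'" using in1 Cmem by simp
      define c where "c = inner (f0 - vb) w'"
      have e1: "\<bar>inner (f0 - vb) (w' + u1)\<bar> \<le> ga / 2"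
      proof -
        have "\<bar>inner (f0 - vb) (w' + u1)\<bar> \<le> norm (f0 - vb) * norm (w' + u1)" by (rule Cauchy_Schwarz_ineq2)
        also have "\<dots> \<le> norm (f0 - vb) * eta"
          using w' by (intro mult_left_mono) (auto simp: dist_norm norm_minus_commute add.commute)
        also have "\<dots> \<le> (norm (f0 - vb) + 1) * (ga / (2 * (norm (f0 - vb) + 1)))"
          using eta by (intro mult_mono) auto
        also have "\<dots> = ga / 2" using den1 by (simp add: field_simps)
        finally show ?thesis .
      qed
      have "c = ga + inner (f0 - vb) (w' + u1)" unfolding c_def ga_def by (simp add: inner_add_right)
      then have c: "c \<ge> ga / 2" using e1 by linarith
      have "f xb + ereal (inner f0 ((xb + s *\<^sub>R w') - xb)) \<le> f (xb + s *\<^sub>R w')"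
        using subdiff_ineq[of f0 f xb "xb + s *\<^sub>R w'"] f0(1) sdF by simp
      moreover have "inner f0 ((xb + s *\<^sub>R w') - xb) = s * inner vb w' + s * c"
        unfolding c_def by (simp add: inner_diff_left algebra_simps)
      ultimately have "ereal (m + s * inner vb w' + s * c) \<le> f (xb + s *\<^sub>R w')"
        using fxb by (simp add: add.assoc)
      then have "ereal (2 * c / s) \<le> diffq2 f xb vb s w'" using qlb[of f xb m s vb w' c] fxb s by simp
      then have "2 * c / s \<le> \<rho>'" using q by (meson ereal_less_eq(3) order.trans)
      moreover have "ga / s > 1" using s by simp
      moreover have "ga / s \<le> 2 * c / s" using c s by (simp add: divide_right_mono)
      ultimately show False using r' by linarith
    qed
  qed
  have "eventually (\<lambda>s. False) (at_right (0::real))"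
    using eventually_conj[OF ev2 ev3] by (rule eventually_mono) simp
  then show False by simp
qed



lemma pform_dom: "v \<in> subdiff (pform A B) x \<Longrightarrow> x \<in> pdom B"
  unfolding subdiff_def pform_def by (auto split: if_splits)

lemma main1:
  fixes f :: "'a::euclidean_space \<Rightarrow> ereal"
  assumes poly: "polyhedral_fun f" and gph: "(xb, vb) \<in> gph_subdiff f"
  shows "(\<exists>N. open N \<and> (xb, vb) \<in> N \<and> (\<forall>z l. (z, l) \<in> N \<inter> gph_subdiff f \<longrightarrow> strictly_twice_epi_diff f z l))
     \<longleftrightarrow> vb \<in> rel_interior (subdiff f xb)"
proof -
  obtain A B where AB: "finite A" "A \<noteq> {}" "finite B" "f = pform A B"
    using rep_polyhedral[OF poly] by blast
  have LDat: "\<exists>A0 C0 r m. LD f x A0 C0 r m" if "v \<in> subdiff f x" for x v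
    using local_data[OF AB(1-3), of x] pform_dom[of v A B x] that AB(4) by blast
  have sv: "vb \<in> subdiff f xb" using gph unfolding gph_subdiff_def by simp
  obtain A0 C0 r m where LD: "LD f xb A0 C0 r m" using LDat[OF sv] by blast
  have fin: "finite A0" "A0 \<noteq> {}" "0 < r" using LD unfolding LD_def by auto
  have sdF: "subdiff f xb = Fs A0 C0" by (rule subd0[OF LD])
  show ?thesis
  proof
    assume "\<exists>N. open N \<and> (xb, vb) \<in> N \<and> (\<forall>z l. (z, l) \<in> N \<inter> gph_subdiff f \<longrightarrow> strictly_twice_epi_diff f z l)"
    then have "strictly_twice_epi_diff f xb vb" using gph by blast
    then show "vb \<in> rel_interior (subdiff f xb)"
    proof (rule contrapos_pp)
      assume "vb \<notin> rel_interior (subdiff f xb)"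
      then show "\<not> strictly_twice_epi_diff f xb vb" using notstrict[OF LD, of vb] sv sdF by simp
    qed
  next
    assume vri: "vb \<in> rel_interior (subdiff f xb)"
    define F where "F = Fs A0 C0"
    have vri': "vb \<in> rel_interior F" using vri sdF F_def by simp
    obtain ep where ep: "ep > 0" "\<And>v. v \<in> F \<Longrightarrow> norm (v - vb) < ep \<Longrightarrow> v \<in> rel_interior F"
      using ri_nbhd[OF vri'] by blast
    show "\<exists>N. open N \<and> (xb, vb) \<in> N \<and> (\<forall>z l. (z, l) \<in> N \<inter> gph_subdiff f \<longrightarrow> strictly_twice_epi_diff f z l)"
    proof (intro exI[of _ "ball xb r \<times> ball vb ep"] conjI allI impI)
      show "open (ball xb r \<times> ball vb ep)" by (intro open_Times) auto
      show "(xb, vb) \<in> ball xb r \<times> ball vb ep" using fin ep by auto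
      fix z l assume zl: "(z, l) \<in> (ball xb r \<times> ball vb ep) \<inter> gph_subdiff f"
      then have sl: "l \<in> subdiff f z" unfolding gph_subdiff_def by simp
      define u where "u = z - xb"
      have z: "z = xb + u" unfolding u_def by simp
      have nu: "norm u < r" using zl unfolding u_def by (auto simp: dist_norm norm_minus_commute)
      have nl: "norm (l - vb) < ep" using zl by (auto simp: dist_norm norm_minus_commute)
      have s: "u \<in> Kc C0 \<and> l \<in> F \<and> inner l u = phr A0 u" using subd[OF LD nu, of l] sl z F_def by simp
      have lr: "l \<in> rel_interior F" using ep(2) s nl by simp
      have "\<forall>g\<in>F. inner g u \<le> inner l u" using nchar[OF fin(1,2)] s F_def by blast
      then have eq: "\<forall>g\<in>F. inner g u = inner l u" using ri_normal[OF lr] by blast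
      have "subdiff f z = F"
      proof
        show "subdiff f z \<subseteq> F" using subd[OF LD nu] z F_def by auto
        show "F \<subseteq> subdiff f z"
        proof
          fix g assume "g \<in> F"
          then show "g \<in> subdiff f z" using subd[OF LD nu, of g] z s eq F_def by simp
        qed
      qed
      then have lri: "l \<in> rel_interior (subdiff f z)" using lr by simp
      obtain A1 C1 r1 m1 where LD1: "LD f z A1 C1 r1 m1" using LDat[OF sl] by blast
      show "strictly_twice_epi_diff f z l"
        using strict_ri[OF LD1] lri subd0[OF LD1] by simp
    qed
  qed
qed



lemma fconj_ge: "ereal (inner l z) - g z \<le> fconj g l"
  unfolding fconj_def by (rule SUP_upper) simp

lemma fconj_le_iff: "fconj g l \<le> s \<longleftrightarrow> (\<forall>z. ereal (inner l z) - g z \<le> s)"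
  unfolding fconj_def by (simp add: SUP_le_iff)

lemma subdiff_conj_iff:
  fixes g :: "'a::real_inner \<Rightarrow> ereal"
  assumes gz: "g z = ereal a"
  shows "l \<in> subdiff g z \<longleftrightarrow> fconj g l = ereal (inner l z - a)"
proof
  assume sl: "l \<in> subdiff g z"
  have "fconj g l \<le> ereal (inner l z - a)"
    unfolding fconj_le_iff
  proof
    fix y
    have "g z + ereal (inner l (y - z)) \<le> g y" by (rule subdiff_ineq[OF sl])
    then show "ereal (inner l y) - g y \<le> ereal (inner l z - a)"
      using gz by (cases "g y") (auto simp: inner_diff_right)
  qed
  moreover have "ereal (inner l z - a) \<le> fconj g l" using fconj_ge[of l z g] gz by simp
  ultimately show "fconj g l = ereal (inner l z - a)" by simp
next
  assume fc: "fconj g l = ereal (inner l z - a)"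
  show "l \<in> subdiff g z" unfolding subdiff_def
  proof (intro CollectI conjI allI)
    show "\<bar>g z\<bar> \<noteq> \<infinity>" using gz by simp
    fix y
    have "ereal (inner l y) - g y \<le> ereal (inner l z - a)" using fconj_ge[of l y g] fc by simp
    then show "g z + ereal (inner l (y - z)) \<le> g y"
      using gz by (cases "g y") (auto simp: inner_diff_right)
  qed
qed

lemma pform_conj_facts:
  fixes A B :: "('a::euclidean_space \<times> real) set"
  assumes A: "finite A" "A \<noteq> {}" and B: "finite B" and Dne: "pdom B \<noteq> {}"
  defines "g \<equiv> pform A B"
  shows "g z \<le> fconj (fconj g) z"
proof (cases "z \<in> pdom B")
  case True
  obtain a b where ab: "(a,b) \<in> A" "pmax A z = inner a z + b" using pmax_in[OF A, of z] by auto
  have gz: "g z = ereal (pmax A z)" using True unfolding g_def pform_def by simp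
  have "a \<in> subdiff g z" unfolding subdiff_def
  proof (intro CollectI conjI allI)
    show "\<bar>g z\<bar> \<noteq> \<infinity>" using gz by simp
    fix y show "g z + ereal (inner a (y - z)) \<le> g y"
    proof (cases "y \<in> pdom B")
      case True
      then have "g y = ereal (pmax A y)" unfolding g_def pform_def by simp
      then show ?thesis using gz ab pmax_ge[OF A(1) ab(1), of y] by (simp add: inner_diff_right)
    next
      case False then show ?thesis unfolding g_def pform_def by simp
    qed
  qed
  then have "fconj g a = ereal (inner a z - pmax A z)" using subdiff_conj_iff[where g=g and z=z, OF gz] by simp
  then have "ereal (inner z a) - fconj g a = g z" using gz by (simp add: inner_commute)
  then show ?thesis using fconj_ge[of z a "fconj g"] by simp
next
  case False
  then obtain c d where cd: "(c,d) \<in> B" "inner c z > d" unfolding pdom_def by auto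
  obtain a1 b1 where ab1: "(a1,b1) \<in> A" using A by auto
  have bound: "fconj g (a1 + s *\<^sub>R c) \<le> ereal (s * d - b1)" if s: "0 \<le> s" for s
    unfolding fconj_le_iff
  proof
    fix y show "ereal (inner (a1 + s *\<^sub>R c) y) - g y \<le> ereal (s * d - b1)"
    proof (cases "y \<in> pdom B")
      case True
      have gy: "g y = ereal (pmax A y)" using True unfolding g_def pform_def by simp
      have "inner c y \<le> d" using True cd unfolding pdom_def by auto
      then have "s * inner c y \<le> s * d" using s by (rule mult_left_mono)
      moreover have "inner a1 y + b1 \<le> pmax A y" by (rule pmax_ge[OF A(1) ab1])
      ultimately show ?thesis using gy by (simp add: inner_add_left)
    next
      case False then show ?thesis unfolding g_def pform_def by simp
    qed
  qed
  have "fconj (fconj g) z = \<infinity>"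
  proof (rule ereal_top)
    fix K :: real
    define s where "s = (\<bar>K - inner z a1 - b1\<bar> + 1) / (inner c z - d)"
    have pos: "inner c z - d > 0" using cd by simp
    have s0: "0 \<le> s" unfolding s_def using pos by simp
    have ss: "s * (inner c z - d) = \<bar>K - inner z a1 - b1\<bar> + 1" unfolding s_def using pos by simp
    have "ereal K \<le> ereal (inner z (a1 + s *\<^sub>R c) - (s * d - b1))"
      using ss by (simp add: inner_add_right inner_commute algebra_simps)
    also have "\<dots> \<le> ereal (inner z (a1 + s *\<^sub>R c)) - fconj g (a1 + s *\<^sub>R c)"
      using bound[OF s0] by (cases "fconj g (a1 + s *\<^sub>R c)") auto
    also have "\<dots> \<le> fconj (fconj g) z" by (rule fconj_ge)
    finally show "ereal K \<le> fconj (fconj g) z" .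
  qed
  then show ?thesis by simp
qed

lemma conj_subdiff:
  fixes g :: "'a::euclidean_space \<Rightarrow> ereal"
  assumes poly: "polyhedral_fun g"
  shows "z \<in> subdiff (fconj g) l \<longleftrightarrow> l \<in> subdiff g z"
proof -
  obtain A B where AB: "finite A" "A \<noteq> {}" "finite B" "pdom B \<noteq> {}" "g = pform A B"
    using rep_polyhedral[OF poly] by blast
  have gg: "g y \<le> fconj (fconj g) y" for y using pform_conj_facts[OF AB(1-4)] AB(5) by simp
  have gnm: "g y \<noteq> -\<infinity>" for y using poly unfolding polyhedral_fun_def proper_fun_def by auto
  show ?thesis
  proof
    assume sz: "z \<in> subdiff (fconj g) l"
    then obtain be where be: "fconj g l = ereal be" using subdiff_finite by blast
    have "fconj (fconj g) z \<le> ereal (inner z l - be)"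
      unfolding fconj_le_iff
    proof
      fix mu
      have "fconj g l + ereal (inner z (mu - l)) \<le> fconj g mu" by (rule subdiff_ineq[OF sz])
      then show "ereal (inner z mu) - fconj g mu \<le> ereal (inner z l - be)"
        using be by (cases "fconj g mu") (auto simp: inner_diff_right)
    qed
    then have le: "g z \<le> ereal (inner z l - be)" using gg[of z] by simp
    then obtain a where gz: "g z = ereal a" using gnm[of z] by (cases "g z") auto
    have "ereal (inner l z) - g z \<le> fconj g l" by (rule fconj_ge)
    then have "inner l z - a \<le> be" using gz be by simp
    moreover have "a \<le> inner z l - be" using le gz by simp
    ultimately have "be = inner l z - a" by (simp add: inner_commute)
    then show "l \<in> subdiff g z" using subdiff_conj_iff[where g=g and z=z, OF gz] be by simp
  next
    assume sl: "l \<in> subdiff g z"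
    then obtain a where gz: "g z = ereal a" using subdiff_finite by blast
    have fc: "fconj g l = ereal (inner l z - a)" using subdiff_conj_iff[where g=g and z=z, OF gz] sl by simp
    show "z \<in> subdiff (fconj g) l" unfolding subdiff_def
    proof (intro CollectI conjI allI)
      show "\<bar>fconj g l\<bar> \<noteq> \<infinity>" using fc by simp
      fix mu
      have "ereal (inner mu z) - g z \<le> fconj g mu" by (rule fconj_ge)
      then show "fconj g l + ereal (inner z (mu - l)) \<le> fconj g mu"
        using fc gz by (simp add: inner_diff_right inner_commute)
    qed
  qed
qed



lemma polyhedron_slice:
  fixes T :: "('a::euclidean_space \<times> real \<times> real) set"
  assumes "polyhedron T"
  shows "polyhedron {p :: 'a \<times> real. (fst p, snd p, 1) \<in> T}"
proof -
  obtain F where F: "finite F" "T = \<Inter>F" "\<forall>h\<in>F. \<exists>a b. a \<noteq> 0 \<and> h = {x. inner a x \<le> b}"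
    using assms unfolding polyhedron_def by blast
  have eq: "{p :: 'a \<times> real. (fst p, snd p, 1) \<in> T} = \<Inter> ((\<lambda>h. {p :: 'a \<times> real. (fst p, snd p, 1) \<in> h}) ` F)"
    unfolding F(2) by (simp add: set_eq_iff)
  have "polyhedron {p :: 'a \<times> real. (fst p, snd p, 1) \<in> h}" if "h \<in> F" for h
  proof -
    from bspec[OF F(3) that] obtain a b where h: "h = {x. inner a x \<le> b}" by blast
    obtain a1 a2 a3 where a: "a = (a1, a2, a3)" by (cases a) auto
    have "{p :: 'a \<times> real. (fst p, snd p, 1) \<in> h} = {p. inner (a1, a2) p \<le> b - a3}"
    proof (rule set_eqI)
      fix p :: "'a \<times> real"
      obtain x q where p: "p = (x, q)" by (cases p) auto
      have "inner a (x, q, 1::real) = inner a1 x + a2 * q + a3" unfolding a by (simp add: inner_Pair)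
      then show "p \<in> {p :: 'a \<times> real. (fst p, snd p, 1) \<in> h} \<longleftrightarrow> p \<in> {p. inner (a1, a2) p \<le> b - a3}"
        unfolding h p by (auto simp: inner_Pair)
    qed
    then show ?thesis using polyhedron_halfspace_le by simp
  qed
  then show ?thesis unfolding eq using F(1) by (intro polyhedron_Inter) auto
qed

lemma conj_polyhedral:
  fixes g :: "'a::euclidean_space \<Rightarrow> ereal"
  assumes poly: "polyhedral_fun g"
  shows "polyhedral_fun (fconj g)"
proof -
  obtain A B where A: "finite A" "A \<noteq> {}" and B: "finite B" and Dne: "pdom B \<noteq> {}" and gAB: "g = pform A B"
    using rep_polyhedral[OF poly] by blast
  obtain x0 where x0: "x0 \<in> pdom B" using Dne by auto
  obtain a1 b1 where ab1: "(a1,b1) \<in> A" using A by auto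
  define M where "M = pmax A"
  have gD: "g x = ereal (M x)" if "x \<in> pdom B" for x using that gAB unfolding pform_def M_def by simp
  have gN: "g x = \<infinity>" if "x \<notin> pdom B" for x using that gAB unfolding pform_def by simp
  have fc_le: "fconj g l \<le> ereal s \<longleftrightarrow> (\<forall>x\<in>pdom B. inner l x - M x \<le> s)" for l s
    unfolding fconj_le_iff
  proof (intro iffI ballI allI)
    fix x assume H: "\<forall>z. ereal (inner l z) - g z \<le> ereal s" and x: "x \<in> pdom B"
    then show "inner l x - M x \<le> s" using H[rule_format, of x] gD[OF x] by simp
  next
    fix z assume H: "\<forall>x\<in>pdom B. inner l x - M x \<le> s"
    show "ereal (inner l z) - g z \<le> ereal s"
      by (cases "z \<in> pdom B") (use H gD gN in auto)
  qed
  have proper: "proper_fun (fconj g)" unfolding proper_fun_def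
  proof
    show "\<forall>l. fconj g l \<noteq> - \<infinity>"
    proof
      fix l
      have "ereal (inner l x0) - g x0 \<le> fconj g l" by (rule fconj_ge)
      then show "fconj g l \<noteq> - \<infinity>" using gD[OF x0] by auto
    qed
    have "fconj g a1 \<le> ereal (- b1)" unfolding fc_le
      using pmax_ge[OF A(1) ab1] M_def by (auto simp: algebra_simps)
    then have "fconj g a1 \<noteq> \<infinity>" by (cases "fconj g a1") auto
    then show "\<exists>l. fconj g l \<noteq> \<infinity>" by blast
  qed
  define S where "S = ((\<lambda>(a,b). (a, -b, 1::real)) ` A) \<union> ((\<lambda>(c,d). (c, d, 0::real)) ` B) \<union> {(0::'a, 1::real, 0::real)}"
  have finS: "finite S" unfolding S_def using A B by auto
  define Cc where "Cc = convex_cone hull S"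
  have polyC: "polyhedron Cc" unfolding Cc_def by (rule polyhedron_convex_cone_hull[OF finS])
  define E where "E = {(l, s, t). 0 \<le> t \<and> (\<forall>x\<in>pdom B. inner l x - t * M x \<le> s)}"
  have Emem: "(l, s, t) \<in> E \<longleftrightarrow> 0 \<le> t \<and> (\<forall>x\<in>pdom B. inner l x - t * M x \<le> s)" for l s t
    unfolding E_def by simp
  have SE1: "(\<lambda>(a,b). (a, -b, 1::real)) ` A \<subseteq> E"
  proof (rule image_subsetI)
    fix p assume pA: "p \<in> A"
    obtain a b where p: "p = (a,b)" by (cases p) auto
    have "\<forall>x\<in>pdom B. inner a x - 1 * M x \<le> - b"
    proof
      fix x show "inner a x - 1 * M x \<le> - b" using pmax_ge[OF A(1), of a b x] pA p unfolding M_def by simp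
    qed
    then show "(\<lambda>(a,b). (a, -b, 1::real)) p \<in> E" using p Emem by simp
  qed
  have SE2: "(\<lambda>(c,d). (c, d, 0::real)) ` B \<subseteq> E"
  proof (rule image_subsetI)
    fix p assume pB: "p \<in> B"
    obtain c d where p: "p = (c,d)" by (cases p) auto
    have "\<forall>x\<in>pdom B. inner c x - 0 * M x \<le> d" using pB p unfolding pdom_def by auto
    then show "(\<lambda>(c,d). (c, d, 0::real)) p \<in> E" using p Emem by simp
  qed
  have SE3: "(0::'a, 1::real, 0::real) \<in> E" using Emem by simp
  have SE: "S \<subseteq> E" unfolding S_def using SE1 SE2 SE3 by (intro Un_least) auto
  have ccE: "convex_cone E" unfolding convex_cone_def
  proof (intro conjI)
    have "(0, 0, 0) \<in> E" using Emem by simp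
    then show "E \<noteq> {}" by blast
    show "convex E" unfolding convex_def
    proof (intro ballI allI impI)
      fix p q :: "'a \<times> real \<times> real" and u v :: real
      assume p: "p \<in> E" and q: "q \<in> E" and uv: "0 \<le> u" "0 \<le> v" "u + v = 1"
      obtain l1 s1 t1 where p': "p = (l1,s1,t1)" by (cases p) auto
      obtain l2 s2 t2 where q': "q = (l2,s2,t2)" by (cases q) auto
      have "(l1,s1,t1) \<in> E" using p p' by simp
      then have h1: "0 \<le> t1 \<and> (\<forall>x\<in>pdom B. inner l1 x - t1 * M x \<le> s1)" by (rule Emem[THEN iffD1])
      have "(l2,s2,t2) \<in> E" using q q' by simp
      then have h2: "0 \<le> t2 \<and> (\<forall>x\<in>pdom B. inner l2 x - t2 * M x \<le> s2)" by (rule Emem[THEN iffD1])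
      have "\<forall>x\<in>pdom B. inner (u *\<^sub>R l1 + v *\<^sub>R l2) x - (u * t1 + v * t2) * M x \<le> u * s1 + v * s2"
      proof
        fix x assume x: "x \<in> pdom B"
        have "inner (u *\<^sub>R l1 + v *\<^sub>R l2) x - (u * t1 + v * t2) * M x =
              u * (inner l1 x - t1 * M x) + v * (inner l2 x - t2 * M x)"
          by (simp add: inner_add_left algebra_simps)
        also have "\<dots> \<le> u * s1 + v * s2"
          using h1 h2 x uv by (intro add_mono mult_left_mono) auto
        finally show "inner (u *\<^sub>R l1 + v *\<^sub>R l2) x - (u * t1 + v * t2) * M x \<le> u * s1 + v * s2" .
      qed
      moreover have "0 \<le> u * t1 + v * t2" using h1 h2 uv by simp
      ultimately have "(u *\<^sub>R l1 + v *\<^sub>R l2, u * s1 + v * s2, u * t1 + v * t2) \<in> E"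
        by (intro Emem[THEN iffD2] conjI)
      then show "u *\<^sub>R p + v *\<^sub>R q \<in> E" using p' q' by simp
    qed
    show "conic E" unfolding conic_def
    proof (intro allI impI)
      fix p :: "'a \<times> real \<times> real" and c :: real
      assume p: "p \<in> E" and c: "0 \<le> c"
      obtain l1 s1 t1 where p': "p = (l1,s1,t1)" by (cases p) auto
      have "(l1,s1,t1) \<in> E" using p p' by simp
      then have h1: "0 \<le> t1 \<and> (\<forall>x\<in>pdom B. inner l1 x - t1 * M x \<le> s1)" by (rule Emem[THEN iffD1])
      have "\<forall>x\<in>pdom B. inner (c *\<^sub>R l1) x - (c * t1) * M x \<le> c * s1"
      proof
        fix x assume x: "x \<in> pdom B"
        have "inner (c *\<^sub>R l1) x - (c * t1) * M x = c * (inner l1 x - t1 * M x)" by (simp add: algebra_simps)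
        also have "\<dots> \<le> c * s1" using h1 x c by (intro mult_left_mono) auto
        finally show "inner (c *\<^sub>R l1) x - (c * t1) * M x \<le> c * s1" .
      qed
      moreover have "0 \<le> c * t1" using h1 c by simp
      ultimately have "(c *\<^sub>R l1, c * s1, c * t1) \<in> E" by (intro Emem[THEN iffD2] conjI)
      then show "c *\<^sub>R p \<in> E" using p' by simp
    qed
  qed
  have CE: "Cc \<subseteq> E" unfolding Cc_def by (rule hull_minimal[where S=convex_cone, OF SE ccE])
  have epi_eq: "epi (fconj g) = {p. (fst p, snd p, 1) \<in> Cc}"
  proof (intro set_eqI iffI)
    fix p :: "'a \<times> real"
    obtain l s where p': "p = (l, s)" by (cases p) auto
    assume "p \<in> {p. (fst p, snd p, 1) \<in> Cc}"
    then have "(l, s, 1) \<in> E" using CE p' by auto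
    then have "0 \<le> (1::real) \<and> (\<forall>x\<in>pdom B. inner l x - 1 * M x \<le> s)" by (rule Emem[THEN iffD1])
    then have "\<forall>x\<in>pdom B. inner l x - M x \<le> s" by simp
    then show "p \<in> epi (fconj g)" using fc_le p' unfolding epi_def by auto
  next
    fix p :: "'a \<times> real"
    obtain l s where p': "p = (l, s)" by (cases p) auto
    assume "p \<in> epi (fconj g)"
    then have H: "\<forall>x\<in>pdom B. inner l x - M x \<le> s" using fc_le p' unfolding epi_def by auto
    show "p \<in> {p. (fst p, snd p, 1) \<in> Cc}"
    proof (rule ccontr)
      assume "p \<notin> {p. (fst p, snd p, 1) \<in> Cc}"
      then have nC: "(l, s, 1) \<notin> Cc" using p' by simp
      have cvC: "convex Cc" unfolding Cc_def by (rule convex_convex_cone_hull)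
      have clC: "closed Cc" by (rule polyhedron_imp_closed[OF polyC])
      obtain a b where ab: "inner a (l, s, 1::real) < b" "\<forall>y\<in>Cc. b < inner a y"
        using separating_hyperplane_closed_point[OF cvC clC nC] by blast
      have "0 \<in> Cc" unfolding Cc_def by (rule convex_cone_hull_contains_0)
      then have "b < inner a 0" using ab(2) by (rule bspec[rotated])
      then have b0: "b < 0" by simp
      have nonneg: "0 \<le> inner a y" if "y \<in> S" for y
      proof (rule ccontr)
        assume "\<not> 0 \<le> inner a y"
        then have neg: "inner a y < 0" by simp
        have yC: "y \<in> Cc" unfolding Cc_def using that by (rule hull_inc)
        define k where "k = b / inner a y"
        have k0: "0 \<le> k" unfolding k_def using neg b0 by (simp add: divide_nonpos_neg)
        have "k *\<^sub>R y \<in> Cc" unfolding Cc_def by (rule convex_cone_hull_mul[OF yC[unfolded Cc_def] k0])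
        then have "b < inner a (k *\<^sub>R y)" using ab(2) by (rule bspec[rotated])
        moreover have "inner a (k *\<^sub>R y) = b" unfolding k_def using neg by simp
        ultimately show False by simp
      qed
      obtain x al be where a': "a = (x, al, be)" by (cases a) auto
      have hA: "inner x ai - al * bi + be \<ge> 0" if "(ai,bi) \<in> A" for ai bi
        using nonneg[of "(ai, -bi, 1)"] that a' unfolding S_def by (force simp: inner_Pair inner_commute)
      have hB: "inner x c + al * d \<ge> 0" if "(c,d) \<in> B" for c d
        using nonneg[of "(c, d, 0)"] that a' unfolding S_def by (force simp: inner_Pair inner_commute)
      have hal: "al \<ge> 0" using nonneg[of "(0, 1, 0)"] a' unfolding S_def by (simp add: inner_Pair)
      have hl: "inner x l + al * s + be < 0" using ab(1) b0 a' by (simp add: inner_Pair inner_commute)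
      show False
      proof (cases "al = 0")
        case False
        then have alp: "al > 0" using hal by simp
        define y where "y = (- (1 / al)) *\<^sub>R x"
        have yD: "y \<in> pdom B" unfolding pdom_def
        proof (clarify)
          fix c d assume cd: "(c,d) \<in> B"
          have "inner c y = - (inner x c) / al" unfolding y_def by (simp add: inner_commute)
          also have "\<dots> \<le> d"
          proof -
            have "- (inner x c) \<le> d * al" using hB[OF cd] by (smt (verit) mult.commute)
            then show ?thesis using pos_divide_le_eq[OF alp] by blast
          qed
          finally show "inner c y \<le> d" .
        qed
        have My: "M y \<le> be / al" unfolding M_def
        proof (subst pmax_le_iff[OF A], clarify)
          fix ai bi assume abi: "(ai,bi) \<in> A"
          have "inner ai y + bi = (al * bi - inner x ai) / al" unfolding y_def using alp
            by (simp add: inner_commute field_simps)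
          also have "\<dots> \<le> be / al" using hA[OF abi] alp by (intro divide_right_mono) auto
          finally show "inner ai y + bi \<le> be / al" .
        qed
        have "inner l y = - (inner x l) / al" unfolding y_def by (simp add: inner_commute)
        also have "\<dots> > (al * s + be) / al" using hl alp by (intro divide_strict_right_mono) auto
        finally have "inner l y > s + be / al" using alp by (simp add: field_simps)
        then have "inner l y - M y > s" using My by linarith
        then show False using H yD by force
      next
        case True
        define y where "y = - x"
        have cy: "inner c y \<le> 0" if "(c,d) \<in> B" for c d
          using hB[OF that] True unfolding y_def by (simp add: inner_commute)
        have ay: "inner ai y \<le> be" if "(ai,bi) \<in> A" for ai bi
          using hA[OF that] True unfolding y_def by (simp add: inner_commute)
        have ly: "inner l y > be" using hl True unfolding y_def by (simp add: inner_commute)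
        define k where "k = (\<bar>s - inner l x0 + M x0\<bar> + 1) / (inner l y - be)"
        have k0: "0 \<le> k" unfolding k_def using ly by simp
        have kk: "k * (inner l y - be) = \<bar>s - inner l x0 + M x0\<bar> + 1" unfolding k_def using ly by simp
        have zD: "x0 + k *\<^sub>R y \<in> pdom B" unfolding pdom_def
        proof (clarify)
          fix c d assume cd: "(c,d) \<in> B"
          have "inner c x0 \<le> d" using x0 cd unfolding pdom_def by auto
          moreover have "k * inner c y \<le> 0" using cy[OF cd] k0 by (simp add: mult_nonneg_nonpos)
          ultimately show "inner c (x0 + k *\<^sub>R y) \<le> d" by (simp add: inner_add_right)
        qed
        have Mz: "M (x0 + k *\<^sub>R y) \<le> M x0 + k * be" unfolding M_def
        proof (subst pmax_le_iff[OF A], clarify)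
          fix ai bi assume abi: "(ai,bi) \<in> A"
          have "inner ai x0 + bi \<le> pmax A x0" by (rule pmax_ge[OF A(1) abi])
          moreover have "k * inner ai y \<le> k * be" using ay[OF abi] k0 by (rule mult_left_mono)
          ultimately show "inner ai (x0 + k *\<^sub>R y) + bi \<le> pmax A x0 + k * be" by (simp add: inner_add_right)
        qed
        have "inner l (x0 + k *\<^sub>R y) - M (x0 + k *\<^sub>R y) \<ge> inner l x0 - M x0 + k * (inner l y - be)"
          using Mz by (simp add: inner_add_right algebra_simps)
        then have "inner l (x0 + k *\<^sub>R y) - M (x0 + k *\<^sub>R y) > s" using kk by linarith
        then show False using H zD by force
      qed
    qed
  qed
  have "polyhedron (epi (fconj g))" unfolding epi_eq by (rule polyhedron_slice[OF polyC])
  then show ?thesis using proper unfolding polyhedral_fun_def by simp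
qed



lemma convex_subdiff: "convex (subdiff h l)"
  unfolding convex_def
proof (intro ballI allI impI)
  fix z1 z2 and u v :: real
  assume z1: "z1 \<in> subdiff h l" and z2: "z2 \<in> subdiff h l" and uv: "0 \<le> u" "0 \<le> v" "u + v = 1"
  obtain c where hc: "h l = ereal c" using subdiff_finite[OF z1] by blast
  show "u *\<^sub>R z1 + v *\<^sub>R z2 \<in> subdiff h l" unfolding subdiff_def
  proof (intro CollectI conjI allI)
    show "\<bar>h l\<bar> \<noteq> \<infinity>" using hc by simp
    fix mu
    have i1: "h l + ereal (inner z1 (mu - l)) \<le> h mu" by (rule subdiff_ineq[OF z1])
    have i2: "h l + ereal (inner z2 (mu - l)) \<le> h mu" by (rule subdiff_ineq[OF z2])
    show "h l + ereal (inner (u *\<^sub>R z1 + v *\<^sub>R z2) (mu - l)) \<le> h mu"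
    proof (cases "h mu")
      case (real e)
      have a1: "c + inner z1 (mu - l) \<le> e" using i1 hc real by simp
      have a2: "c + inner z2 (mu - l) \<le> e" using i2 hc real by simp
      have "c + inner (u *\<^sub>R z1 + v *\<^sub>R z2) (mu - l) = u * (c + inner z1 (mu - l)) + v * (c + inner z2 (mu - l))"
        using uv(3) by (simp add: inner_add_left algebra_simps) (metis distrib_right mult_1 mult.commute)
      also have "\<dots> \<le> u * e + v * e" using a1 a2 uv by (intro add_mono mult_left_mono) auto
      also have "\<dots> = e" using uv(3) by (metis distrib_right mult_1)
      finally show ?thesis using hc real by simp
    next
      case PInf then show ?thesis by simp
    next
      case MInf then show ?thesis using i1 hc by simp
    qed
  qed
qed

lemma cd_lemma:
  fixes g :: "'a::euclidean_space \<Rightarrow> ereal"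
  assumes poly: "polyhedral_fun g" and sl: "lb \<in> subdiff g zb"
  shows "lb \<in> rel_interior (subdiff g zb) \<longleftrightarrow> zb \<in> rel_interior (subdiff (fconj g) lb)"
proof -
  obtain A B where AB: "finite A" "A \<noteq> {}" "finite B" "g = pform A B"
    using rep_polyhedral[OF poly] by blast
  obtain A0 C0 r m where LD: "LD g zb A0 C0 r m"
    using local_data[OF AB(1-3), of zb] pform_dom[of lb A B zb] sl AB(4) by blast
  have fin: "finite A0" "A0 \<noteq> {}" "0 < r" using LD unfolding LD_def by auto
  define F where "F = Fs A0 C0"
  have sdF: "subdiff g zb = F" using subd0[OF LD] F_def by simp
  have lbF: "lb \<in> F" using sl sdF by simp
  define G where "G = subdiff (fconj g) lb"
  have Gmem: "z \<in> G \<longleftrightarrow> lb \<in> subdiff g z" for z unfolding G_def by (rule conj_subdiff[OF poly])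
  have zbG: "zb \<in> G" using Gmem sl by simp
  have cvG: "convex G" unfolding G_def by (rule convex_subdiff)
  have Nl: "zb + u \<in> G \<longleftrightarrow> (\<forall>f\<in>F. inner f u \<le> inner lb u)" if nu: "norm u < r" for u
  proof -
    have "zb + u \<in> G \<longleftrightarrow> u \<in> Kc C0 \<and> lb \<in> F \<and> inner lb u = phr A0 u"
      using Gmem subd[OF LD nu, of lb] F_def by simp
    also have "\<dots> \<longleftrightarrow> (\<forall>f\<in>F. inner f u \<le> inner lb u)" using nchar[OF fin(1,2)] lbF F_def by auto
    finally show ?thesis .
  qed
  show ?thesis
  proof
    assume "lb \<in> rel_interior (subdiff g zb)"
    then have lri: "lb \<in> rel_interior F" using sdF by simp
    define K0 where "K0 = {u. \<forall>f\<in>F. inner f u = inner lb u}"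
    have NK: "zb + u \<in> G \<longleftrightarrow> u \<in> K0" if nu: "norm u < r" for u
    proof -
      have "(\<forall>f\<in>F. inner f u \<le> inner lb u) \<longleftrightarrow> u \<in> K0"
        using ri_normal[OF lri, of u] unfolding K0_def by force
      then show ?thesis using Nl[OF nu] by simp
    qed
    have GK: "z - zb \<in> K0" if zG: "z \<in> G" for z
    proof -
      define s where "s = min 1 (r / (2 * (norm (z - zb) + 1)))"
      have den: "0 < 2 * (norm (z - zb) + 1)" by (smt (verit) norm_ge_zero)
      have s: "0 < s" "s \<le> 1" "s \<le> r / (2 * (norm (z - zb) + 1))"
        unfolding s_def using fin den by (auto intro: divide_pos_pos)
      have "s * norm (z - zb) \<le> s * (norm (z - zb) + 1)" using s by simp
      also have "\<dots> \<le> r / (2 * (norm (z - zb) + 1)) * (norm (z - zb) + 1)"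
        by (intro mult_right_mono[OF s(3)]) (smt (verit) norm_ge_zero)
      also have "\<dots> = r / 2" using den by (simp add: field_simps)
      also have "\<dots> < r" using fin by simp
      finally have nr: "norm (s *\<^sub>R (z - zb)) < r" using s by simp
      have "(1 - s) *\<^sub>R zb + s *\<^sub>R z \<in> G"
        using cvG zbG zG s unfolding convex_def by simp
      moreover have "(1 - s) *\<^sub>R zb + s *\<^sub>R z = zb + s *\<^sub>R (z - zb)" by (simp add: algebra_simps)
      ultimately have "s *\<^sub>R (z - zb) \<in> K0" using NK[OF nr] by simp
      then show ?thesis using s(1) unfolding K0_def by simp
    qed
    define H where "H = {z. z - zb \<in> K0}"
    have affH: "affine H" unfolding affine_def H_def K0_def
    proof (intro ballI allI impI, simp only: mem_Collect_eq)
      fix x y and u v :: real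
      assume x: "\<forall>f\<in>F. inner f (x - zb) = inner lb (x - zb)" and y: "\<forall>f\<in>F. inner f (y - zb) = inner lb (y - zb)"
        and uv: "u + v = 1"
      have e: "u *\<^sub>R x + v *\<^sub>R y - zb = u *\<^sub>R (x - zb) + v *\<^sub>R (y - zb)"
        using uv by (simp add: algebra_simps) (metis scaleR_add_left scaleR_one)
      show "\<forall>f\<in>F. inner f (u *\<^sub>R x + v *\<^sub>R y - zb) = inner lb (u *\<^sub>R x + v *\<^sub>R y - zb)"
        unfolding e using x y by (simp add: inner_add_right)
    qed
    have GH: "G \<subseteq> H" unfolding H_def using GK by auto
    have aff: "affine hull G \<subseteq> H" by (rule hull_minimal[where S=affine, OF GH affH])
    have "ball zb r \<inter> affine hull G \<subseteq> G"
    proof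
      fix z assume z: "z \<in> ball zb r \<inter> affine hull G"
      then have "z - zb \<in> K0" using aff H_def by auto
      moreover have "norm (z - zb) < r" using z by (simp add: dist_norm norm_minus_commute)
      ultimately have "zb + (z - zb) \<in> G" using NK by blast
      then show "z \<in> G" by simp
    qed
    then have "zb \<in> rel_interior G" unfolding mem_rel_interior_ball using zbG fin by blast
    then show "zb \<in> rel_interior (subdiff (fconj g) lb)" using G_def by simp
  next
    assume "zb \<in> rel_interior (subdiff (fconj g) lb)"
    then have zri: "zb \<in> rel_interior G" using G_def by simp
    obtain e where e: "e > 0" "ball zb e \<inter> affine hull G \<subseteq> G"
      using zri unfolding mem_rel_interior_ball by blast
    show "lb \<in> rel_interior (subdiff g zb)"
    proof (rule ccontr)
      assume "lb \<notin> rel_interior (subdiff g zb)"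
      then have lnr: "lb \<notin> rel_interior F" using sdF by simp
      have cvx: "convex F" unfolding F_def by (rule convex_Fs)
      obtain a where a: "a \<noteq> 0" "\<And>y. y \<in> F \<Longrightarrow> a \<bullet> lb \<le> a \<bullet> y" "\<And>y. y \<in> rel_interior F \<Longrightarrow> a \<bullet> lb < a \<bullet> y"
        using supporting_hyperplane_rel_boundary[OF cvx lbF lnr] by blast
      have "rel_interior F \<noteq> {}" using rel_interior_eq_empty[OF cvx] lbF by auto
      then obtain f0 where f0r: "f0 \<in> rel_interior F" by auto
      then have f0: "f0 \<in> F" "a \<bullet> lb < a \<bullet> f0" using a(3) rel_interior_subset by auto
      define u1 where "u1 = - a"
      have hu1: "\<forall>f\<in>F. inner f u1 \<le> inner lb u1" using a(2) unfolding u1_def by (simp add: inner_commute)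
      define s where "s = min r e / (2 * (norm u1 + 1))"
      have den: "0 < 2 * (norm u1 + 1)" by (smt (verit) norm_ge_zero)
      have s0: "0 < s" unfolding s_def using fin e den by (auto intro: divide_pos_pos)
      have "s * norm u1 \<le> s * (norm u1 + 1)" using s0 by simp
      also have "\<dots> = min r e / 2" unfolding s_def using den by (simp add: field_simps)
      also have "\<dots> < min r e" using fin e by (simp add: min_def)
      finally have ns: "norm (s *\<^sub>R u1) < min r e" using s0 by simp
      have "\<forall>f\<in>F. inner f (s *\<^sub>R u1) \<le> inner lb (s *\<^sub>R u1)"
        using hu1 s0 by (simp add: mult_left_mono)
      then have p1: "zb + s *\<^sub>R u1 \<in> G" using Nl[of "s *\<^sub>R u1"] ns by simp
      have "2 *\<^sub>R zb + (- 1) *\<^sub>R (zb + s *\<^sub>R u1) \<in> affine hull G"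
        by (rule mem_affine[OF affine_affine_hull hull_inc[OF zbG] hull_inc[OF p1]]) simp
      moreover have "2 *\<^sub>R zb + (- 1) *\<^sub>R (zb + s *\<^sub>R u1) = zb + (- (s *\<^sub>R u1))" by (simp add: algebra_simps scaleR_2)
      ultimately have m: "zb + (- (s *\<^sub>R u1)) \<in> affine hull G" by (simp only:)
      have "zb + (- (s *\<^sub>R u1)) \<in> ball zb e" using ns by (simp add: dist_norm)
      with m e(2) have "zb + (- (s *\<^sub>R u1)) \<in> G" by blast
      moreover have "norm (- (s *\<^sub>R u1)) < r" using ns by simp
      ultimately have "\<forall>f\<in>F. inner f (- (s *\<^sub>R u1)) \<le> inner lb (- (s *\<^sub>R u1))" using Nl by blast
      then have "inner f0 (- (s *\<^sub>R u1)) \<le> inner lb (- (s *\<^sub>R u1))" using f0(1) by blast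
      then have "s * inner lb u1 \<le> s * inner f0 u1" by simp
      then have "inner lb u1 \<le> inner f0 u1" using s0 by simp
      then show False using f0(2) unfolding u1_def by (simp add: inner_commute)
    qed
  qed
qed

theorem corollary4p4:
  fixes g :: "'a::euclidean_space \<Rightarrow> ereal" and zb lb :: 'a
  assumes "polyhedral_fun g"
    and "(zb, lb) \<in> gph_subdiff g"
  shows "((\<exists>N. open N \<and> (zb, lb) \<in> N \<and>
             (\<forall>z l. (z, l) \<in> N \<inter> gph_subdiff g \<longrightarrow> strictly_twice_epi_diff g z l))
          \<longleftrightarrow>
          (\<exists>U. open U \<and> (lb, zb) \<in> U \<and>
             (\<forall>l z. (l, z) \<in> U \<inter> gph_subdiff (fconj g) \<longrightarrow> strictly_twice_epi_diff (fconj g) l z)))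
       \<and> ((\<exists>U. open U \<and> (lb, zb) \<in> U \<and>
             (\<forall>l z. (l, z) \<in> U \<inter> gph_subdiff (fconj g) \<longrightarrow> strictly_twice_epi_diff (fconj g) l z))
          \<longleftrightarrow> lb \<in> rel_interior (subdiff g zb))
       \<and> (lb \<in> rel_interior (subdiff g zb) \<longleftrightarrow> zb \<in> rel_interior (subdiff (fconj g) lb))"
proof -
  have sl: "lb \<in> subdiff g zb" using assms(2) unfolding gph_subdiff_def by simp
  have pc: "polyhedral_fun (fconj g)" by (rule conj_polyhedral[OF assms(1)])
  have gc: "(lb, zb) \<in> gph_subdiff (fconj g)"
    unfolding gph_subdiff_def using conj_subdiff[OF assms(1)] sl by simp
  note ac = main1[OF assms(1) assms(2)]
  note bd = main1[OF pc gc]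
  note cd = cd_lemma[OF assms(1) sl]
  show ?thesis using ac bd cd by blast
qed


end
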